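(* Let $D_1\subset\mathbb{R}^2$ be an open disc centered at the origin, let $\boldsymbol{\gamma}_1,\dots,\boldsymbol{\gamma}_m$ be distinct unit vectors in $\mathbb{R}^2$ with $m$ odd, and $c_1,\dots,c_m$ nonzero reals. Then the vector-valued star transform $\mathcal{S}$ is invertible, i.e. every vector field $\mathbf{f}$ on $\mathbb{R}^2$ with components in $C^2_c(D_1)$ is uniquely determined by $\mathcal{S}\mathbf{f}$.
   Context: For $\mathbf{x}=(x_1,x_2)$ set $\mathbf{x}^\perp=(-x_2,x_1)$. For a unit vector $\boldsymbol{\gamma}$, $\mathcal{X}_{\boldsymbol{\gamma}}h(\mathbf{x})=\int_0^\infty h(\mathbf{x}+t\boldsymbol{\gamma})\,dt$. The vector-valued star transform is $\mathcal{S}\mathbf{f}=\sum_{i=1}^m c_i\,\mathcal{X}_{\boldsymbol{\gamma}_i}\begin{bmatrix}\mathbf{f}\cdot\boldsymbol{\gamma}_i\\ \mathbf{f}\cdot\boldsymbol{\gamma}_i^\perp\end{bmatrix}$. *)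

theory Defs
  imports "HOL-Analysis.Analysis"
begin

definition perp :: "real^2 \<Rightarrow> real^2" where
  "perp x = vector [- (x $ 2), x $ 1]"

definition ray_transform :: "real^2 \<Rightarrow> (real^2 \<Rightarrow> real) \<Rightarrow> real^2 \<Rightarrow> real" where
  "ray_transform gam h x = integral {0..} (\<lambda>t::real. h (x + t *\<^sub>R gam))"

definition star_transform ::
  "nat \<Rightarrow> (nat \<Rightarrow> real) \<Rightarrow> (nat \<Rightarrow> real^2) \<Rightarrow> (real^2 \<Rightarrow> real^2) \<Rightarrow> real^2 \<Rightarrow> real^2" where
  "star_transform m c gam f x =
     (\<Sum>i<m. c i *\<^sub>R vector [ray_transform (gam i) (\<lambda>y. f y \<bullet> gam i) x,
                               ray_transform (gam i) (\<lambda>y. f y \<bullet> perp (gam i)) x])"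

definition C2 :: "(real^2 \<Rightarrow> real) \<Rightarrow> bool" where
  "C2 h \<longleftrightarrow> (\<exists>(D1 :: real^2 \<Rightarrow> ((real^2) \<Rightarrow>\<^sub>L real))
                  (D2 :: real^2 \<Rightarrow> ((real^2) \<Rightarrow>\<^sub>L ((real^2) \<Rightarrow>\<^sub>L real))).
      (\<forall>x. (h has_derivative blinfun_apply (D1 x)) (at x)) \<and>
      (\<forall>x. (D1 has_derivative blinfun_apply (D2 x)) (at x)) \<and>
      continuous_on UNIV D2)"

definition C2c :: "(real^2) set \<Rightarrow> (real^2 \<Rightarrow> real) \<Rightarrow> bool" where
  "C2c U h \<longleftrightarrow> C2 h \<and> compact (closure {x. h x \<noteq> 0}) \<and> closure {x. h x \<noteq> 0} \<subseteq> U"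

end

theory Submission
  imports Defs
begin


lemma cont_param:
  fixes F :: "real \<Rightarrow> real \<Rightarrow> real"
  assumes "continuous_on UNIV (\<lambda>(s,y). F s y)"
  shows "continuous_on UNIV (\<lambda>s. integral {c..d} (F s))"
proof -
  have "continuous_on (UNIV \<times> cbox c d) (\<lambda>(s,y). F s y)"
    using assms continuous_on_subset by blast
  from integral_continuous_on_param[OF this] show ?thesis by simp
qed

definition JJ :: "(real\<times>real \<Rightarrow> real) \<Rightarrow> real \<Rightarrow> (real\<times>real\<Rightarrow>real) \<Rightarrow> real" where
 "JJ H r \<psi> = integral {-r..r} (\<lambda>s. integral {-r..r} (\<lambda>y. H(s,y) * \<psi>(s,y)))"

lemma cont_pair:
  fixes G :: "real\<times>real \<Rightarrow> real"
  assumes "continuous_on UNIV G"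
  shows "continuous_on UNIV (\<lambda>(s,y). G (s,y))"
  using assms by simp

lemma cont_inner:
  fixes G :: "real\<times>real \<Rightarrow> real"
  assumes "continuous_on UNIV G"
  shows "continuous_on UNIV (\<lambda>s. integral {c..d} (\<lambda>y. G(s,y)))"
  using cont_param[of "\<lambda>s y. G(s,y)"] assms by simp

lemma cont_y:
  fixes G :: "real\<times>real \<Rightarrow> real"
  assumes "continuous_on UNIV G"
  shows "continuous_on S (\<lambda>y. G(s,y))"
  by (rule continuous_on_compose2[OF assms]) (auto intro!: continuous_intros)

lemma JJ_add:
  assumes "continuous_on UNIV H" "continuous_on UNIV p" "continuous_on UNIV q"
  shows "JJ H r (\<lambda>x. p x + q x) = JJ H r p + JJ H r q"
proof -
  have cp: "continuous_on UNIV (\<lambda>x. H x * p x)" and cq: "continuous_on UNIV (\<lambda>x. H x * q x)"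
    using assms by (auto intro!: continuous_intros)
  have "integral {-r..r} (\<lambda>y. H(s,y) * (p(s,y) + q(s,y))) =
        integral {-r..r} (\<lambda>y. H(s,y) * p(s,y)) + integral {-r..r} (\<lambda>y. H(s,y) * q(s,y))" for s
    unfolding distrib_left
    by (rule integral_add; rule integrable_continuous_interval; rule cont_y[of "\<lambda>x. H x * _ x", simplified]) 
       (use cp cq in auto)
  then show ?thesis unfolding JJ_def
    by (simp, intro integral_add integrable_continuous_interval cont_inner[of "\<lambda>x. H x * _ x", simplified, THEN continuous_on_subset]) 
       (use cp cq in auto)
qed

lemma JJ_cmul:
  shows "JJ H r (\<lambda>x. c * p x) = c * JJ H r p"
  unfolding JJ_def by (simp add: mult.left_commute[of _ c])

lemma rpf_cont: "real_polynomial_function p \<Longrightarrow> continuous_on UNIV p"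
  by (simp add: continuous_on_polymonial_function real_polynomial_function_eq)

lemma bl_pair:
  fixes p :: "real\<times>real \<Rightarrow> real"
  assumes "bounded_linear p"
  shows "p (s,y) = s * p (1,0) + y * p (0,1)"
proof -
  have "(s,y) = s *\<^sub>R (1,0) + y *\<^sub>R (0,1)" by simp
  then have "p (s,y) = p (s *\<^sub>R (1,0) + y *\<^sub>R (0,1))" by metis
  also have "\<dots> = s * p (1,0) + y * p (0,1)"
  proof -
    interpret bounded_linear p by fact
    show ?thesis by (simp only: add scale) simp
  qed
  finally show ?thesis .
qed

definition QQ where
  "QQ H r \<psi> \<longleftrightarrow> (\<forall>a b. JJ H r (\<lambda>(s,y). s^a * y^b * \<psi>(s,y)) = 0)"

lemma QQ_poly:
  assumes H: "continuous_on UNIV H" and p: "real_polynomial_function p"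
  shows "\<forall>\<psi>. continuous_on UNIV \<psi> \<longrightarrow> QQ H r \<psi> \<longrightarrow> QQ H r (\<lambda>x. \<psi> x * p x)"
  using p
proof (induction p rule: real_polynomial_function.induct)
  case (linear f)
  show ?case
  proof (intro allI impI)
    fix \<psi> :: "real\<times>real \<Rightarrow> real"
    assume c: "continuous_on UNIV \<psi>" and q: "QQ H r \<psi>"
    show "QQ H r (\<lambda>x. \<psi> x * f x)"
      unfolding QQ_def
    proof (intro allI)
      fix a b
      have eq: "(\<lambda>(s,y). s^a * y^b * (\<psi>(s,y) * f(s,y))) =
        (\<lambda>x. f (1,0) * (case x of (s,y) \<Rightarrow> s^(Suc a) * y^b * \<psi>(s,y)) + f(0,1) * (case x of (s,y) \<Rightarrow> s^a * y^(Suc b) * \<psi>(s,y)))"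
        by (rule ext, clarify, subst bl_pair[OF linear], simp add: algebra_simps)
      have c1: "continuous_on UNIV (\<lambda>x. f (1,0) * (case x of (s,y) \<Rightarrow> s^(Suc a) * y^b * \<psi>(s,y)))"
       and c2: "continuous_on UNIV (\<lambda>x. f (0,1) * (case x of (s,y) \<Rightarrow> s^a * y^(Suc b) * \<psi>(s,y)))"
        using c by (auto simp: split_beta intro!: continuous_intros)
      show "JJ H r (\<lambda>(s,y). s^a * y^b * (\<psi>(s,y) * f(s,y))) = 0"
        unfolding eq JJ_add[OF H c1 c2] JJ_cmul
        using q[unfolded QQ_def, rule_format, of "Suc a" b] q[unfolded QQ_def, rule_format, of a "Suc b"]
        by (simp only: mult_zero_right add_0)
    qed
  qed
next
  case (const c)
  show ?case
  proof (intro allI impI)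
    fix \<psi> :: "real\<times>real \<Rightarrow> real"
    assume q: "QQ H r \<psi>"
    show "QQ H r (\<lambda>x. \<psi> x * c)" unfolding QQ_def
    proof (intro allI)
      fix a b
      have eq: "(\<lambda>(s,y). s^a * y^b * (\<psi>(s,y) * c)) = (\<lambda>x. c * (case x of (s,y) \<Rightarrow> s^a * y^b * \<psi>(s,y)))"
        by (auto simp: algebra_simps)
      show "JJ H r (\<lambda>(s,y). s^a * y^b * (\<psi>(s,y) * c)) = 0"
        unfolding eq JJ_cmul using q unfolding QQ_def by simp
    qed
  qed
next
  case (add f g)
  show ?case
  proof (intro allI impI)
    fix \<psi> :: "real\<times>real \<Rightarrow> real"
    assume c: "continuous_on UNIV \<psi>" and q: "QQ H r \<psi>"
    have cf: "continuous_on UNIV f" "continuous_on UNIV g" using add rpf_cont by auto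
    show "QQ H r (\<lambda>x. \<psi> x * (f x + g x))"
      unfolding QQ_def
    proof (intro allI)
      fix a b
      have eq: "(\<lambda>(s,y). s^a * y^b * (\<psi>(s,y) * (f(s,y) + g (s,y)))) =
        (\<lambda>x. (case x of (s,y) \<Rightarrow> s^a * y^b * (\<psi>(s,y) * f(s,y))) + (case x of (s,y) \<Rightarrow> s^a * y^b * (\<psi>(s,y) * g(s,y))))"
        by (auto simp: algebra_simps)
      have c1: "continuous_on UNIV (\<lambda>x. (case x of (s,y) \<Rightarrow> s^a * y^b * (\<psi>(s,y) * f(s,y))))"
       and c2: "continuous_on UNIV (\<lambda>x. (case x of (s,y) \<Rightarrow> s^a * y^b * (\<psi>(s,y) * g(s,y))))"
        using c cf by (auto simp: split_beta intro!: continuous_intros)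
      show "JJ H r (\<lambda>(s,y). s^a * y^b * (\<psi>(s,y) * (f(s,y) + g(s,y)))) = 0"
        unfolding eq JJ_add[OF H c1 c2] using add c q unfolding QQ_def by simp
    qed
  qed
next
  case (mult f g)
  show ?case
  proof (intro allI impI)
    fix \<psi> :: "real\<times>real \<Rightarrow> real"
    assume c: "continuous_on UNIV \<psi>" and q: "QQ H r \<psi>"
    have cf: "continuous_on UNIV f" using mult rpf_cont by auto
    have "QQ H r (\<lambda>x. \<psi> x * f x)" using mult c q by blast
    moreover have "continuous_on UNIV (\<lambda>x. \<psi> x * f x)" using c cf by (auto intro!: continuous_intros)
    ultimately have "QQ H r (\<lambda>x. (\<psi> x * f x) * g x)" using mult by blast
    then show "QQ H r (\<lambda>x. \<psi> x * (f x * g x))" by (simp add: mult.assoc)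
  qed
qed

lemma JJ_poly:
  assumes H: "continuous_on UNIV H" and p: "real_polynomial_function p"
    and mom: "\<forall>a b. JJ H r (\<lambda>(s,y). s^a * y^b) = 0"
  shows "JJ H r p = 0"
proof -
  have "QQ H r (\<lambda>x. 1)" using mom unfolding QQ_def by simp
  then have "QQ H r (\<lambda>x. 1 * p x)" using QQ_poly[OF H p] continuous_on_const by blast
  then have "JJ H r (\<lambda>(s,y). s^0 * y^0 * (1 * p(s,y))) = 0" unfolding QQ_def by blast
  moreover have "(\<lambda>(s,y). s^0 * y^0 * (1 * p(s,y))) = p" by auto
  ultimately show ?thesis by simp
qed

lemma JJ_bound:
  fixes G :: "real\<times>real \<Rightarrow> real"
  assumes G: "continuous_on UNIV G" and r: "r \<ge> 0"
    and B: "\<And>s y. s \<in> {-r..r} \<Longrightarrow> y \<in> {-r..r} \<Longrightarrow> \<bar>G(s,y)\<bar> \<le> B"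
  shows "\<bar>integral {-r..r} (\<lambda>s. integral {-r..r} (\<lambda>y. G(s,y)))\<bar> \<le> B * (2*r) * (2*r)"
proof -
  have B0: "0 \<le> B" using B[of 0 0] r by force
  have inner: "\<bar>integral {-r..r} (\<lambda>y. G(s,y))\<bar> \<le> B * (2*r)" if s: "s \<in> {-r..r}" for s
  proof -
    have "((\<lambda>y. G(s,y)) has_integral integral {-r..r} (\<lambda>y. G(s,y))) (cbox (-r) r)"
      using integrable_continuous_interval[OF cont_y[OF G]] by (simp add: has_integral_integral)
    from has_integral_bound[OF B0 this] show ?thesis using B[OF s] r by (simp add: content_real)
  qed
  have "((\<lambda>s. integral {-r..r} (\<lambda>y. G(s,y))) has_integral integral {-r..r} (\<lambda>s. integral {-r..r} (\<lambda>y. G(s,y)))) (cbox (-r) r)"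
    using integrable_continuous_interval[OF continuous_on_subset[OF cont_inner[OF G]]] by (simp add: has_integral_integral)
  from has_integral_bound[of "B*(2*r)", OF _ this] show ?thesis using inner r B0 by (simp add: content_real)
qed

lemma small_imp_zero:
  fixes x K :: real
  assumes "\<And>e. e > 0 \<Longrightarrow> \<bar>x\<bar> \<le> K * e"
  shows "x = 0"
proof (rule ccontr)
  assume "x \<noteq> 0"
  have K: "K \<ge> 0" using assms[of 1] by simp
  define e where "e = \<bar>x\<bar> / (2 * (K + 1))"
  have e: "e > 0" using \<open>x \<noteq> 0\<close> K by (simp add: e_def)
  have "K * e < \<bar>x\<bar>" using \<open>x \<noteq> 0\<close> K unfolding e_def by (simp add: field_simps) (smt (verit) mult_nonneg_nonneg)
  with assms[OF e] show False by simp
qed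

lemma moments_zero:
  fixes H :: "real\<times>real \<Rightarrow> real"
  assumes H: "continuous_on UNIV H" and r: "r > 0"
    and mom: "\<forall>a b. JJ H r (\<lambda>(s,y). s^a * y^b) = 0"
  shows "\<forall>s\<in>{-r..r}. \<forall>y\<in>{-r..r}. H(s,y) = 0"
proof -
  define S where "S = cbox (-r,-r) (r,r)"
  have cS: "compact S" unfolding S_def by simp
  obtain Bd where Bd: "\<And>x. x \<in> S \<Longrightarrow> \<bar>H x\<bar> \<le> Bd"
    using compact_imp_bounded[OF compact_continuous_image[OF continuous_on_subset[OF H] cS]]
    unfolding bounded_iff by force
  have memS: "(s,y) \<in> S" if "s \<in> {-r..r}" "y \<in> {-r..r}" for s y
    using that unfolding S_def by (simp add: cbox_Pair_eq)
  have JHH: "JJ H r H = 0"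
  proof (rule small_imp_zero[of _ "Bd * (2*r) * (2*r)"])
    fix e :: real assume e: "e > 0"
    obtain p where p: "real_polynomial_function p" "\<And>x. x \<in> S \<Longrightarrow> \<bar>H x - p x\<bar> < e"
      using Stone_Weierstrass_real_polynomial_function[OF cS continuous_on_subset[OF H] e] by blast
    have cp: "continuous_on UNIV p" using rpf_cont[OF p(1)] .
    have cmp: "continuous_on UNIV (\<lambda>x. (-1) * p x)" using cp by (auto intro!: continuous_intros)
    have "JJ H r (\<lambda>x. H x + (-1) * p x) = JJ H r H + (-1) * JJ H r p"
      using JJ_add[OF H H cmp] JJ_cmul[of H r "-1" p] by (simp only:)
    then have eq: "JJ H r H = JJ H r (\<lambda>x. H x + (-1) * p x)" using JJ_poly[OF H p(1) mom] by simp
    have "\<bar>JJ H r (\<lambda>x. H x + (-1) * p x)\<bar> \<le> (Bd * e) * (2*r) * (2*r)"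
      unfolding JJ_def
    proof (rule JJ_bound[of "\<lambda>x. H x * (H x + (-1) * p x)"])
      show "continuous_on UNIV (\<lambda>x. H x * (H x + (-1) * p x))" using H cp by (auto intro!: continuous_intros)
      show "0 \<le> r" using r by simp
      fix s y assume "s \<in> {-r..r}" "y \<in> {-r..r}"
      then have m: "(s,y) \<in> S" using memS by simp
      have "\<bar>H (s,y) * (H (s,y) - p (s,y))\<bar> = \<bar>H (s,y)\<bar> * \<bar>H (s,y) - p (s,y)\<bar>" by (simp add: abs_mult)
      also have "\<dots> \<le> Bd * e"
        using Bd[OF m] p(2)[OF m] by (intro mult_mono) auto
      finally show "\<bar>H (s,y) * (H (s,y) + (-1) * p (s,y))\<bar> \<le> Bd * e" by simp
    qed
    then show "\<bar>JJ H r H\<bar> \<le> Bd * (2*r) * (2*r) * e" using eq by (simp add: algebra_simps)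
  qed
  define G where "G s = integral {-r..r} (\<lambda>y. H(s,y) * H(s,y))" for s
  have cHH: "continuous_on UNIV (\<lambda>x. H x * H x)" using H by (auto intro!: continuous_intros)
  have cG: "continuous_on UNIV G" unfolding G_def using cont_inner[OF cHH] by simp
  have G0: "G s \<ge> 0" for s unfolding G_def
    by (rule integral_nonneg) (auto intro!: integrable_continuous_interval cont_y[OF cHH, simplified])
  have "integral {-r..r} G = 0" using JHH unfolding JJ_def G_def[symmetric] .
  moreover have "G integrable_on {-r..r}"
    using integrable_continuous_interval[OF continuous_on_subset[OF cG]] by blast
  ultimately have "(G has_integral 0) (cbox (-r) r)"
    by (metis box_real(2) has_integral_integral)
  then have Gz: "G s = 0" if "s \<in> {-r..r}" for s
    using has_integral_0_cbox_imp_0[OF continuous_on_subset[OF cG] G0] that r by auto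
  show ?thesis
  proof (intro ballI)
    fix s y assume s: "s \<in> {-r..r}" and y: "y \<in> {-r..r}"
    have ci: "continuous_on (cbox (-r) r) (\<lambda>y. H(s,y) * H(s,y))" using cont_y[OF cHH] by simp
    have "integral {-r..r} (\<lambda>y. H(s,y) * H(s,y)) = 0" using Gz[OF s] unfolding G_def .
    moreover have "(\<lambda>y. H(s,y) * H(s,y)) integrable_on {-r..r}"
      using integrable_continuous_interval ci by simp
    ultimately have i: "((\<lambda>y. H(s,y) * H(s,y)) has_integral 0) (cbox (-r) r)"
      by (metis box_real(2) has_integral_integral)
    have ne: "box (-r) r \<noteq> {}" using r by simp
    have ym: "y \<in> cbox (-r) r" using y by simp
    have "H(s,y) * H(s,y) = 0"
      by (rule has_integral_0_cbox_imp_0[OF ci _ i ne ym]) simp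
    then show "H(s,y) = 0" by simp
  qed
qed



lemma JJ_sum:
  assumes H: "continuous_on UNIV H" and A: "finite A"
    and c: "\<And>j. j \<in> A \<Longrightarrow> continuous_on UNIV (f j)"
  shows "JJ H r (\<lambda>x. \<Sum>j\<in>A. f j x) = (\<Sum>j\<in>A. JJ H r (f j))"
  using A c
proof (induction A rule: finite_induct)
  case empty
  have "JJ H r (\<lambda>x. 0 * H x) = 0 * JJ H r H" by (rule JJ_cmul)
  then show ?case by simp
next
  case (insert j A)
  have c1: "continuous_on UNIV (\<lambda>x. \<Sum>j\<in>A. f j x)"
    using insert by (auto intro!: continuous_intros)
  have "JJ H r (\<lambda>x. \<Sum>j\<in>insert j A. f j x) = JJ H r (\<lambda>x. f j x + (\<Sum>j\<in>A. f j x))"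
    using insert by simp
  also have "\<dots> = JJ H r (f j) + JJ H r (\<lambda>x. \<Sum>j\<in>A. f j x)"
    using JJ_add[OF H _ c1, of "f j"] insert by simp
  finally show ?case using insert by simp
qed

lemma moments_from_mu:
  fixes H :: "real\<times>real \<Rightarrow> real"
  assumes H: "continuous_on UNIV H" and M: "infinite M"
    and z: "\<And>u k. u \<in> M \<Longrightarrow> JJ H r (\<lambda>(s,y). (y - u * s)^k) = 0"
  shows "JJ H r (\<lambda>(s,y). s^a * y^b) = 0"
proof -
  define k where "k = a + b"
  define cc where "cc j = of_nat (k choose j) * (-1)^j * JJ H r (\<lambda>(s,y). s^j * y^(k-j))" for j
  have expand: "JJ H r (\<lambda>(s,y). (y - u * s)^k) = (\<Sum>j\<le>k. cc j * u^j)" for u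
  proof -
    have pt: "(y - u * s)^k = (\<Sum>j\<le>k. (of_nat (k choose j) * (-1)^j * u^j) * (s^j * y^(k-j)))" for s y
    proof -
      have "(y - u * s)^k = ((-u * s) + y)^k" by simp
      also have "\<dots> = (\<Sum>j\<le>k. of_nat (k choose j) * (-u * s)^j * y^(k-j))" by (rule binomial_ring)
      also have "\<dots> = (\<Sum>j\<le>k. (of_nat (k choose j) * (-1)^j * u^j) * (s^j * y^(k-j)))"
        by (rule sum.cong) (auto simp: power_mult_distrib[symmetric] mult.commute mult.left_commute)
      finally show ?thesis .
    qed
    have "(\<lambda>(s,y). (y - u * s)^k) = (\<lambda>x. \<Sum>j\<le>k. (of_nat (k choose j) * (-1)^j * u^j) * (case x of (s,y) \<Rightarrow> s^j * y^(k-j)))"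
      by (rule ext) (simp add: pt split: prod.split)
    then have "JJ H r (\<lambda>(s,y). (y - u * s)^k) = (\<Sum>j\<le>k. JJ H r (\<lambda>x. (of_nat (k choose j) * (-1)^j * u^j) * (case x of (s,y) \<Rightarrow> s^j * y^(k-j))))"
      by (simp only:) (rule JJ_sum[OF H], auto simp: split_beta intro!: continuous_intros)
    also have "\<dots> = (\<Sum>j\<le>k. cc j * u^j)"
      unfolding JJ_cmul cc_def by (simp add: algebra_simps)
    finally show ?thesis .
  qed
  have "M \<subseteq> {u. (\<Sum>j\<le>k. cc j * u^j) = 0}" 
  proof
    fix u assume "u \<in> M"
    then show "u \<in> {u. (\<Sum>j\<le>k. cc j * u^j) = 0}" using z[of u k] expand[of u] by simp
  qed
  then have "infinite {u. (\<Sum>j\<le>k. cc j * u^j) = 0}" using M finite_subset by blast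
  then have "cc a = 0" using polyfun_roots_finite[of cc a k] unfolding k_def by fastforce
  then show ?thesis unfolding cc_def k_def by simp
qed



lemma contH2:
  fixes H :: "real\<times>real \<Rightarrow> real" and f g :: "'a::topological_space \<Rightarrow> real"
  assumes "continuous_on UNIV H" "continuous_on S f" "continuous_on S g"
  shows "continuous_on S (\<lambda>x. H (f x, g x))"
  by (rule continuous_on_compose2[OF assms(1)]) (auto intro!: continuous_intros assms(2,3))

lemma int_zero_outside:
  fixes F :: "real \<Rightarrow> real"
  assumes F: "continuous_on {a..b} F" and le: "a \<le> c" "c \<le> d" "d \<le> b"
    and z: "\<And>x. x \<in> {a..b} \<Longrightarrow> x \<le> c \<or> d \<le> x \<Longrightarrow> F x = 0"
  shows "integral {a..b} F = integral {c..d} F"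
proof -
  have i: "F integrable_on {p..q}" if "a \<le> p" "q \<le> b" for p q
    by (rule integrable_continuous_interval, rule continuous_on_subset[OF F]) (use that in auto)
  have z1: "integral {a..c} F = 0"
  proof -
    have "integral {a..c} F = integral {a..c} (\<lambda>x. 0)" by (rule integral_cong) (use z le in auto)
    then show ?thesis by simp
  qed
  have z2: "integral {d..b} F = 0"
  proof -
    have "integral {d..b} F = integral {d..b} (\<lambda>x. 0)" by (rule integral_cong) (use z le in auto)
    then show ?thesis by simp
  qed
  have "integral {a..c} F + integral {c..d} F = integral {a..d} F"
    by (rule Henstock_Kurzweil_Integration.integral_combine) (use le i in auto)
  moreover have "integral {a..d} F + integral {d..b} F = integral {a..b} F"
    by (rule Henstock_Kurzweil_Integration.integral_combine) (use le i in auto)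
  ultimately show ?thesis using z1 z2 by simp
qed

lemma phi_zero_imp_mom:
  fixes H :: "real\<times>real \<Rightarrow> real"
  assumes H: "continuous_on UNIV H" and r: "r > 0"
    and Hz: "\<And>s y. \<bar>s\<bar> \<ge> r \<or> \<bar>y\<bar> \<ge> r \<Longrightarrow> H(s,y) = 0"
    and Phi: "\<And>\<tau>. integral {-r..r} (\<lambda>s. H(s, u * s + \<tau>)) = 0"
  shows "JJ H r (\<lambda>(s,y). (y - u * s)^k) = 0"
proof -
  define K where "K = r * (1 + \<bar>u\<bar>)"
  have K: "K \<ge> r" unfolding K_def using r by (simp add: algebra_simps)
  have "0 = integral {-K..K} (\<lambda>\<tau>. \<tau>^k * integral {-r..r} (\<lambda>s. H(s, u * s + \<tau>)))"
    using Phi by simp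
  also have "\<dots> = integral {-K..K} (\<lambda>\<tau>. integral {-r..r} (\<lambda>s. \<tau>^k * H(s, u * s + \<tau>)))"
    by simp
  also have "\<dots> = integral (cbox (-K) K) (\<lambda>\<tau>. integral (cbox (-r) r) (\<lambda>s. \<tau>^k * H(s, u * s + \<tau>)))"
    by simp
  also have "\<dots> = integral (cbox (-r) r) (\<lambda>s. integral (cbox (-K) K) (\<lambda>\<tau>. \<tau>^k * H(s, u * s + \<tau>)))"
  proof (rule integral_swap_continuous)
    have "continuous_on UNIV (\<lambda>x. fst x ^ k * H (snd x, u * snd x + fst x))"
      by (intro continuous_intros contH2[OF H]) 
    then show "continuous_on (cbox (- K, - r) (K, r)) (\<lambda>(\<tau>, s). \<tau> ^ k * H (s, u * s + \<tau>))"
      by (simp add: split_beta) (meson continuous_on_subset subset_UNIV)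
  qed
  also have "\<dots> = integral {-r..r} (\<lambda>s. integral {-r..r} (\<lambda>y. H(s,y) * (y - u * s)^k))"
  proof (simp only: box_real, rule integral_cong)
    fix s assume s: "s \<in> {-r..r}"
    define F where "F y = (y - u * s)^k * H(s,y)" for y
    have cF: "continuous_on UNIV F" unfolding F_def
      by (intro continuous_intros contH2[OF H])
    have "integral {-K..K} (\<lambda>\<tau>. \<tau>^k * H(s, u * s + \<tau>)) = integral {-K..K} (F \<circ> (\<lambda>x. x + u * s))"
      unfolding F_def o_def by (simp add: add.commute)
    also have "\<dots> = integral {-K + u * s..K + u * s} F"
      by (rule integral_shift) (rule continuous_on_subset[OF cF], simp)
    also have "\<dots> = integral {-r..r} F"
    proof (rule int_zero_outside)
      show "continuous_on {- K + u * s..K + u * s} F" using cF continuous_on_subset by blast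
      have "\<bar>u * s\<bar> \<le> \<bar>u\<bar> * r" using s by (auto simp: abs_mult intro!: mult_left_mono)
      then show "- K + u * s \<le> - r" "- r \<le> r" "r \<le> K + u * s" using r unfolding K_def by (auto simp: algebra_simps)
      fix x assume "x \<le> - r \<or> r \<le> x"
      then have "\<bar>x\<bar> \<ge> r" by auto
      then show "F x = 0" unfolding F_def using Hz by simp
    qed
    finally show "integral {-K..K} (\<lambda>\<tau>. \<tau>^k * H(s, u * s + \<tau>)) = integral {-r..r} (\<lambda>y. H(s,y) * (y - u * s)^k)"
      unfolding F_def by (simp add: mult.commute)
  qed
  also have "\<dots> = JJ H r (\<lambda>(s,y). (y - u * s)^k)" unfolding JJ_def by simp
  finally show ?thesis by simp
qed



lemma trunc_int:
  fixes F :: "real \<Rightarrow> real"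
  assumes T: "T \<ge> 0" and c: "continuous_on {0..T} F" and z: "\<And>t. t \<ge> T \<Longrightarrow> F t = 0"
  shows "(F has_integral integral {0..T} F) {0..}"
proof -
  have "(F has_integral integral {0..T} F) {0..T}"
    using integrable_continuous_interval[OF c] by (simp add: has_integral_integral)
  then have A: "((\<lambda>x. if x \<in> {0..T} then F x else 0) has_integral integral {0..T} F) {0..}"
    by (rule iffD2[OF has_integral_restrict, rotated]) auto
  have "((\<lambda>x. if x \<in> {0..T} then F x else 0) has_integral integral {0..T} F) {0..} = (F has_integral integral {0..T} F) {0..}"
    by (rule has_integral_cong) (use z in auto)
  with A show ?thesis by simp
qed

lemma Phi_zero:
  fixes P :: "real\<times>real \<Rightarrow> real"
  assumes r: "r > 0" and Pz: "\<And>a b. \<bar>a\<bar> \<ge> r \<or> \<bar>b\<bar> \<ge> r \<Longrightarrow> P(a,b) = 0"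
    and tau: "\<bar>\<tau>\<bar> \<ge> r * (1 + \<bar>u\<bar>)"
  shows "integral {-r..r} (\<lambda>s. P(s, u * s + \<tau>)) = 0"
proof -
  have "integral {-r..r} (\<lambda>s. P(s, u * s + \<tau>)) = integral {-r..r} (\<lambda>s. 0)"
  proof (rule integral_cong)
    fix s assume s: "s \<in> {-r..r}"
    have "\<bar>u * s\<bar> \<le> \<bar>u\<bar> * r" using s by (auto simp: abs_mult intro!: mult_left_mono)
    moreover have "\<bar>\<tau>\<bar> \<le> \<bar>u * s + \<tau>\<bar> + \<bar>u * s\<bar>"
      using abs_triangle_ineq4[of "u * s + \<tau>" "u * s"] by simp
    moreover have "r * (1 + \<bar>u\<bar>) = r + \<bar>u\<bar> * r" by (simp add: algebra_simps)
    ultimately have "\<bar>u * s + \<tau>\<bar> \<ge> r" using tau by linarith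
    then show "P(s, u * s + \<tau>) = 0" using Pz by simp
  qed
  then show ?thesis by simp
qed

lemma abs_sum_ge:
  fixes a b r K :: real
  assumes "\<bar>b\<bar> \<ge> K" "\<bar>a\<bar> \<le> K - r"
  shows "\<bar>a + b\<bar> \<ge> r"
proof -
  have "\<bar>(a + b) - a\<bar> \<le> \<bar>a + b\<bar> + \<bar>a\<bar>" by (rule abs_triangle_ineq4)
  then show ?thesis using assms by simp
qed

lemma P_ray_zero:
  fixes P :: "real\<times>real \<Rightarrow> real"
  assumes r: "r > 0" and Pz: "\<And>a b. \<bar>a\<bar> \<ge> r \<or> \<bar>b\<bar> \<ge> r \<Longrightarrow> P(a,b) = 0"
    and beta: "g2 - u * g1 \<noteq> 0"
    and tau0: "\<bar>\<tau>0\<bar> \<le> r * (1 + \<bar>u\<bar>)"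
    and t: "t \<ge> 2 * (r * (1 + \<bar>u\<bar>)) / \<bar>g2 - u * g1\<bar>"
  shows "P(s + t * g1, u * s + \<tau>0 + t * g2) = 0"
proof (cases "\<bar>s + t * g1\<bar> \<ge> r")
  case True then show ?thesis using Pz by simp
next
  case False
  define K where "K = r * (1 + \<bar>u\<bar>)"
  define bb where "bb = \<bar>g2 - u * g1\<bar>"
  have bb: "bb > 0" using beta unfolding bb_def by simp
  have K0: "K \<ge> 0" unfolding K_def using r by simp
  have "2 * K / bb \<ge> 0" using K0 bb by simp
  then have t0: "t \<ge> 0" using t unfolding K_def[symmetric] bb_def[symmetric] by linarith
  have "t * bb \<ge> 2 * K" using t bb unfolding K_def[symmetric] bb_def[symmetric] by (simp add: field_simps)
  moreover have "\<bar>t * (g2 - u * g1)\<bar> = t * bb" unfolding bb_def using t0 by (simp add: abs_mult)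
  ultimately have "\<bar>t * (g2 - u * g1)\<bar> \<ge> 2 * K" by simp
  then have w: "\<bar>\<tau>0 + t * (g2 - u * g1)\<bar> \<ge> K"
    using abs_sum_ge[of "2 * K" "t * (g2 - u * g1)" "\<tau>0" K] tau0 unfolding K_def[symmetric] by (simp add: add.commute)
  have "\<bar>u\<bar> * \<bar>s + t * g1\<bar> \<le> \<bar>u\<bar> * r" using False by (intro mult_left_mono) auto
  moreover have "K - r = \<bar>u\<bar> * r" unfolding K_def by (simp add: algebra_simps)
  ultimately have v: "\<bar>u * (s + t * g1)\<bar> \<le> K - r" by (simp add: abs_mult)
  have eq: "u * s + \<tau>0 + t * g2 = u * (s + t * g1) + (\<tau>0 + t * (g2 - u * g1))" by (simp add: algebra_simps)
  have "\<bar>u * s + \<tau>0 + t * g2\<bar> \<ge> r" using abs_sum_ge[OF w v] eq by (simp only:)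
  then show ?thesis by (intro Pz disjI2)
qed



lemma LI:
  fixes P :: "real\<times>real \<Rightarrow> real"
  assumes P: "continuous_on UNIV P" and r: "r > 0"
    and Pz: "\<And>a b. \<bar>a\<bar> \<ge> r \<or> \<bar>b\<bar> \<ge> r \<Longrightarrow> P(a,b) = 0"
    and beta: "g2 - u * g1 \<noteq> 0"
    and tau0: "\<bar>\<tau>0\<bar> \<le> r * (1 + \<bar>u\<bar>)"
    and S: "S \<ge> r + (2 * (r * (1 + \<bar>u\<bar>)) / \<bar>g2 - u * g1\<bar>) * \<bar>g1\<bar>"
  shows "integral {-S..S} (\<lambda>s. integral {0..2 * (r * (1 + \<bar>u\<bar>)) / \<bar>g2 - u * g1\<bar>} (\<lambda>t. P(s + t * g1, u * s + \<tau>0 + t * g2)))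
     = (if g2 - u * g1 > 0 then integral {\<tau>0..r * (1 + \<bar>u\<bar>)} (\<lambda>\<tau>. integral {-r..r} (\<lambda>s. P(s, u * s + \<tau>)))
        else integral {-(r * (1 + \<bar>u\<bar>))..\<tau>0} (\<lambda>\<tau>. integral {-r..r} (\<lambda>s. P(s, u * s + \<tau>)))) / \<bar>g2 - u * g1\<bar>"
proof -
  define K where "K = r * (1 + \<bar>u\<bar>)"
  define bt where "bt = g2 - u * g1"
  define T1 where "T1 = 2 * K / \<bar>bt\<bar>"
  define Phi where "Phi \<tau> = integral {-r..r} (\<lambda>s. P(s, u * s + \<tau>))" for \<tau>
  have K0: "K > 0" unfolding K_def using r by (simp add: add_pos_nonneg)
  have bt0: "\<bar>bt\<bar> > 0" using beta unfolding bt_def by simp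
  have T10: "T1 \<ge> 0" unfolding T1_def using K0 bt0 by simp
  have T1bt: "T1 * \<bar>bt\<bar> = 2 * K" unfolding T1_def using bt0 by simp
  have tau0': "-K \<le> \<tau>0" "\<tau>0 \<le> K" using tau0 unfolding K_def by auto
  have cPhi: "continuous_on UNIV Phi" unfolding Phi_def
    by (rule cont_param[of "\<lambda>\<tau> s. P(s, u * s + \<tau>)"])
       (unfold case_prod_unfold, intro continuous_intros contH2[OF P])
  have Phiz: "Phi x = 0" if "\<bar>x\<bar> \<ge> K" for x
    unfolding Phi_def by (rule Phi_zero[where P=P, OF r Pz]) (use that in \<open>auto simp: K_def\<close>)
  have "integral {-S..S} (\<lambda>s. integral {0..T1} (\<lambda>t. P(s + t * g1, u * s + \<tau>0 + t * g2)))
      = integral (cbox (-S) S) (\<lambda>s. integral (cbox 0 T1) (\<lambda>t. P(s + t * g1, u * s + \<tau>0 + t * g2)))"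
    by simp
  also have "\<dots> = integral (cbox 0 T1) (\<lambda>t. integral (cbox (-S) S) (\<lambda>s. P(s + t * g1, u * s + \<tau>0 + t * g2)))"
  proof (rule integral_swap_continuous)
    have "continuous_on UNIV (\<lambda>x. P (fst x + snd x * g1, u * fst x + \<tau>0 + snd x * g2))"
      by (intro continuous_intros contH2[OF P])
    then show "continuous_on (cbox (- S, 0) (S, T1)) (\<lambda>(s, t). P (s + t * g1, u * s + \<tau>0 + t * g2))"
      by (simp add: split_beta) (meson continuous_on_subset subset_UNIV)
  qed
  also have "\<dots> = integral {0..T1} (\<lambda>t. Phi (\<tau>0 + t * bt))"
  proof (simp only: box_real, rule integral_cong)
    fix t assume t: "t \<in> {0..T1}"
    define F where "F x = P(x, u * x + (\<tau>0 + t * bt))" for x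
    have cF: "continuous_on UNIV F" unfolding F_def by (intro continuous_intros contH2[OF P])
    have ar: "u * (s + t * g1) + (\<tau>0 + t * bt) = u * s + \<tau>0 + t * g2" for s
      unfolding bt_def by (simp add: algebra_simps)
    have "integral {-S..S} (\<lambda>s. P(s + t * g1, u * s + \<tau>0 + t * g2)) = integral {-S..S} (F \<circ> (\<lambda>x. x + t * g1))"
      unfolding F_def o_def ar ..
    also have "\<dots> = integral {-S + t * g1..S + t * g1} F"
      by (rule integral_shift) (rule continuous_on_subset[OF cF], simp)
    also have "\<dots> = integral {-r..r} F"
    proof (rule int_zero_outside)
      show "continuous_on {- S + t * g1..S + t * g1} F" using cF continuous_on_subset by blast
      have "\<bar>t * g1\<bar> \<le> T1 * \<bar>g1\<bar>" using t by (auto simp: abs_mult intro!: mult_right_mono)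
      moreover have "T1 * \<bar>g1\<bar> \<le> S - r" using S unfolding T1_def K_def bt_def by simp
      ultimately show "- S + t * g1 \<le> - r" "- r \<le> r" "r \<le> S + t * g1" using r by auto
      fix x assume "x \<le> - r \<or> r \<le> x"
      then have "\<bar>x\<bar> \<ge> r" by auto
      then show "F x = 0" unfolding F_def by (intro Pz disjI1)
    qed
    also have "\<dots> = Phi (\<tau>0 + t * bt)" unfolding F_def Phi_def ..
    finally show "integral {-S..S} (\<lambda>s. P(s + t * g1, u * s + \<tau>0 + t * g2)) = Phi (\<tau>0 + t * bt)" .
  qed
  also have "\<dots> = (if bt > 0 then integral {\<tau>0..K} Phi else integral {-K..\<tau>0} Phi) / \<bar>bt\<bar>"
  proof (cases "bt > 0")
    case True
    have hi: "((\<lambda>t. bt *\<^sub>R Phi (\<tau>0 + t * bt)) has_integral integral {\<tau>0 + 0 * bt..\<tau>0 + T1 * bt} Phi) {0..T1}"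
    proof (rule has_integral_substitution[where g="\<lambda>t. \<tau>0 + t * bt" and c=\<tau>0 and d="\<tau>0 + T1 * bt"])
      show "0 \<le> T1" by (rule T10)
      show "\<tau>0 + 0 * bt \<le> \<tau>0 + T1 * bt" using T10 True by simp
      show "(\<lambda>t. \<tau>0 + t * bt) ` {0..T1} \<subseteq> {\<tau>0..\<tau>0 + T1 * bt}" using True by (auto intro!: mult_right_mono)
      show "continuous_on {\<tau>0..\<tau>0 + T1 * bt} Phi" using cPhi continuous_on_subset by blast
      fix x show "((\<lambda>t. \<tau>0 + t * bt) has_field_derivative bt) (at x within {0..T1})"
        by (auto intro!: derivative_eq_intros)
    qed
    have e1: "integral {0..T1} (\<lambda>t. bt *\<^sub>R Phi (\<tau>0 + t * bt)) = integral {\<tau>0 + 0 * bt..\<tau>0 + T1 * bt} Phi"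
      by (rule integral_unique[OF hi])
    have e2: "integral {0..T1} (\<lambda>t. bt *\<^sub>R Phi (\<tau>0 + t * bt)) = bt * integral {0..T1} (\<lambda>t. Phi (\<tau>0 + t * bt))"
      unfolding real_scaleR_def by (rule integral_mult_right)
    have T1b: "T1 * bt = 2 * K" using T1bt True by simp
    have e3: "integral {\<tau>0..\<tau>0 + T1 * bt} Phi = integral {\<tau>0..K} Phi + integral {K..\<tau>0 + T1 * bt} Phi"
      by (rule Henstock_Kurzweil_Integration.integral_combine[symmetric])
         (use tau0' T1b in \<open>auto intro!: integrable_continuous_interval continuous_on_subset[OF cPhi]\<close>)
    have e4: "integral {K..\<tau>0 + T1 * bt} Phi = integral {K..\<tau>0 + T1 * bt} (\<lambda>x. 0)"
      by (rule integral_cong) (use Phiz K0 in auto)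
    have "bt * integral {0..T1} (\<lambda>t. Phi (\<tau>0 + t * bt)) = integral {\<tau>0..K} Phi"
      using e1 e2 e3 e4 by simp
    then show ?thesis using True by (simp add: divide_simps mult.commute)
  next
    case False
    then have btn: "bt < 0" using bt0 by simp
    have hi: "((\<lambda>t. (-bt) *\<^sub>R (\<lambda>x. Phi (-x)) (-\<tau>0 - t * bt)) has_integral integral {-\<tau>0 - 0 * bt..-\<tau>0 - T1 * bt} (\<lambda>x. Phi (-x))) {0..T1}"
    proof (rule has_integral_substitution[where g="\<lambda>t. -\<tau>0 - t * bt" and c="-\<tau>0" and d="-\<tau>0 - T1 * bt"])
      show "0 \<le> T1" by (rule T10)
      show "-\<tau>0 - 0 * bt \<le> -\<tau>0 - T1 * bt" using T10 btn by (simp add: mult_nonneg_nonpos)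
      show "(\<lambda>t. -\<tau>0 - t * bt) ` {0..T1} \<subseteq> {-\<tau>0..-\<tau>0 - T1 * bt}"
        using btn by (auto simp: mult_nonneg_nonpos intro!: mult_right_mono_neg)
      show "continuous_on {-\<tau>0..-\<tau>0 - T1 * bt} (\<lambda>x. Phi (-x))"
        by (rule continuous_on_compose2[OF cPhi]) (auto intro!: continuous_intros)
      fix x show "((\<lambda>t. -\<tau>0 - t * bt) has_field_derivative -bt) (at x within {0..T1})"
        by (auto intro!: derivative_eq_intros)
    qed
    have e1: "integral {0..T1} (\<lambda>t. (-bt) *\<^sub>R (\<lambda>x. Phi (-x)) (-\<tau>0 - t * bt)) = integral {-\<tau>0 - 0 * bt..-\<tau>0 - T1 * bt} (\<lambda>x. Phi (-x))"
      by (rule integral_unique[OF hi])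
    have e2: "integral {0..T1} (\<lambda>t. (-bt) *\<^sub>R (\<lambda>x. Phi (-x)) (-\<tau>0 - t * bt)) = (-bt) * integral {0..T1} (\<lambda>t. Phi (\<tau>0 + t * bt))"
    proof -
      have "\<And>t. - (- \<tau>0 - t * bt) = \<tau>0 + t * bt" by simp
      then show ?thesis unfolding real_scaleR_def by (simp only: integral_mult_right)
    qed
    have e3: "integral {-\<tau>0 - 0 * bt..-\<tau>0 - T1 * bt} (\<lambda>x. Phi (-x)) = integral {\<tau>0 + T1 * bt..\<tau>0} Phi"
      using Henstock_Kurzweil_Integration.integral_reflect_real[where a="\<tau>0 + T1 * bt" and b=\<tau>0 and f=Phi] by simp
    have T1b: "T1 * bt = - 2 * K" using T1bt btn by simp
    have e4: "integral {\<tau>0 + T1 * bt..\<tau>0} Phi = integral {\<tau>0 + T1 * bt..-K} Phi + integral {-K..\<tau>0} Phi"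
      by (rule Henstock_Kurzweil_Integration.integral_combine[symmetric])
         (use tau0' T1b in \<open>auto intro!: integrable_continuous_interval continuous_on_subset[OF cPhi]\<close>)
    have e5: "integral {\<tau>0 + T1 * bt..-K} Phi = integral {\<tau>0 + T1 * bt..-K} (\<lambda>x. 0)"
      by (rule integral_cong) (use Phiz K0 in auto)
    have "(-bt) * integral {0..T1} (\<lambda>t. Phi (\<tau>0 + t * bt)) = integral {-K..\<tau>0} Phi"
      using e1 e2 e3 e4 e5 by simp
    then show ?thesis using btn by (simp add: divide_simps mult.commute)
  qed
  finally show ?thesis unfolding K_def bt_def T1_def Phi_def by simp
qed



lemma zero_from_prim:
  fixes F :: "real \<Rightarrow> real"
  assumes c: "continuous_on {a..b} F" and ab: "a < b"
    and z: "\<And>x. x \<in> {a..b} \<Longrightarrow> integral {a..x} F = 0"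
    and x: "x \<in> {a..b}"
  shows "F x = 0"
proof -
  have d1: "((\<lambda>u. integral {a..u} F) has_vector_derivative F x) (at x within {a..b})"
    by (rule integral_has_vector_derivative[OF c x])
  have d0: "((\<lambda>u. 0::real) has_vector_derivative 0) (at x within {a..b})" by (rule has_vector_derivative_const)
  have d2: "((\<lambda>u. integral {a..u} F) has_vector_derivative 0) (at x within {a..b})"
    by (rule has_vector_derivative_transform[OF x _ d0]) (use z in auto)
  show ?thesis using vector_derivative_unique_within_closed_interval[of a b x _ "F x" 0] ab x d1 d2 by simp
qed

lemma lin_Phi:
  fixes H1 H2 :: "real\<times>real \<Rightarrow> real"
  assumes H1: "continuous_on UNIV H1" and H2: "continuous_on UNIV H2"
  shows "integral {p..q} (\<lambda>\<tau>. integral {-r..r} (\<lambda>s. a * H1 (s, u * s + \<tau>) + b * H2 (s, u * s + \<tau>)))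
       = a * integral {p..q} (\<lambda>\<tau>. integral {-r..r} (\<lambda>s. H1 (s, u * s + \<tau>)))
       + b * integral {p..q} (\<lambda>\<tau>. integral {-r..r} (\<lambda>s. H2 (s, u * s + \<tau>)))"
proof -
  have ci: "continuous_on UNIV (\<lambda>s. H (s, u * s + \<tau>))" if "continuous_on UNIV H" for H :: "real\<times>real \<Rightarrow> real" and \<tau>
    by (intro continuous_intros contH2[OF that])
  have co: "continuous_on UNIV (\<lambda>\<tau>. integral {-r..r} (\<lambda>s. H (s, u * s + \<tau>)))" if "continuous_on UNIV H" for H :: "real\<times>real \<Rightarrow> real"
    by (rule cont_param[of "\<lambda>\<tau> s. H(s, u * s + \<tau>)"])
       (unfold case_prod_unfold, intro continuous_intros contH2[OF that])
  have "integral {-r..r} (\<lambda>s. a * H1 (s, u * s + \<tau>) + b * H2 (s, u * s + \<tau>))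
      = a * integral {-r..r} (\<lambda>s. H1 (s, u * s + \<tau>)) + b * integral {-r..r} (\<lambda>s. H2 (s, u * s + \<tau>))" for \<tau>
    by (subst integral_add) (auto intro!: integrable_continuous_interval continuous_on_subset[OF ci] H1 H2 continuous_intros)
  then have "integral {p..q} (\<lambda>\<tau>. integral {-r..r} (\<lambda>s. a * H1 (s, u * s + \<tau>) + b * H2 (s, u * s + \<tau>)))
      = integral {p..q} (\<lambda>\<tau>. a * integral {-r..r} (\<lambda>s. H1 (s, u * s + \<tau>)) + b * integral {-r..r} (\<lambda>s. H2 (s, u * s + \<tau>)))"
    by simp
  also have "\<dots> = a * integral {p..q} (\<lambda>\<tau>. integral {-r..r} (\<lambda>s. H1 (s, u * s + \<tau>)))
       + b * integral {p..q} (\<lambda>\<tau>. integral {-r..r} (\<lambda>s. H2 (s, u * s + \<tau>)))"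
    by (subst integral_add) (auto intro!: integrable_continuous_interval continuous_on_subset[OF co] H1 H2 continuous_intros)
  finally show ?thesis .
qed

lemma alg_step:
  fixes c g1 g2 bt :: "nat \<Rightarrow> real"
  assumes bt: "\<forall>i<m. bt i \<noteq> 0"
  shows "(\<Sum>i<m. c i * ((if bt i > 0 then g1 i * (T1 - P1) + g2 i * (T2 - P2) else g1 i * P1 + g2 i * P2) / \<bar>bt i\<bar>))
    = (\<Sum>i<m. c i / bt i * (if bt i > 0 then g1 i * T1 + g2 i * T2 else 0))
      - ((\<Sum>i<m. c i / bt i * g1 i) * P1 + (\<Sum>i<m. c i / bt i * g2 i) * P2)"
proof -
  have "c i * ((if bt i > 0 then g1 i * (T1 - P1) + g2 i * (T2 - P2) else g1 i * P1 + g2 i * P2) / \<bar>bt i\<bar>)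
      = c i / bt i * (if bt i > 0 then g1 i * T1 + g2 i * T2 else 0) - (c i / bt i * g1 i * P1 + c i / bt i * g2 i * P2)"
    if "i < m" for i
  proof (cases "bt i > 0")
    case True then show ?thesis by (simp add: field_simps)
  next
    case False
    then have "bt i < 0" using bt that by force
    then show ?thesis by (simp add: field_simps)
  qed
  then have "(\<Sum>i<m. c i * ((if bt i > 0 then g1 i * (T1 - P1) + g2 i * (T2 - P2) else g1 i * P1 + g2 i * P2) / \<bar>bt i\<bar>))
     = (\<Sum>i<m. c i / bt i * (if bt i > 0 then g1 i * T1 + g2 i * T2 else 0) - (c i / bt i * g1 i * P1 + c i / bt i * g2 i * P2))"
    by (intro sum.cong) auto
  also have "\<dots> = (\<Sum>i<m. c i / bt i * (if bt i > 0 then g1 i * T1 + g2 i * T2 else 0))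
      - ((\<Sum>i<m. c i / bt i * g1 i) * P1 + (\<Sum>i<m. c i / bt i * g2 i) * P2)"
    by (simp add: sum_subtractf sum.distrib sum_distrib_right)
  finally show ?thesis .
qed

lemma gen_eq:
  fixes H1 H2 :: "real\<times>real \<Rightarrow> real" and g1 g2 c a b :: "nat \<Rightarrow> real"
  assumes H1: "continuous_on UNIV H1" and H2: "continuous_on UNIV H2" and r: "r > 0"
    and Hz1: "\<And>x y. \<bar>x\<bar> \<ge> r \<or> \<bar>y\<bar> \<ge> r \<Longrightarrow> H1(x,y) = 0"
    and Hz2: "\<And>x y. \<bar>x\<bar> \<ge> r \<or> \<bar>y\<bar> \<ge> r \<Longrightarrow> H2(x,y) = 0"
    and E: "\<And>x y. (\<Sum>i<m. c i * integral {0..} (\<lambda>t. a i * H1 (x + t * g1 i, y + t * g2 i) + b i * H2 (x + t * g1 i, y + t * g2 i))) = 0"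
    and bt: "\<forall>i<m. g2 i - u * g1 i \<noteq> 0"
    and tau0: "\<bar>\<tau>0\<bar> \<le> r * (1 + \<bar>u\<bar>)"
  shows "(\<Sum>i<m. c i * ((if g2 i - u * g1 i > 0
            then a i * (integral {-(r * (1 + \<bar>u\<bar>))..r * (1 + \<bar>u\<bar>)} (\<lambda>\<tau>. integral {-r..r} (\<lambda>s. H1 (s, u * s + \<tau>))) - integral {-(r * (1 + \<bar>u\<bar>))..\<tau>0} (\<lambda>\<tau>. integral {-r..r} (\<lambda>s. H1 (s, u * s + \<tau>))))
               + b i * (integral {-(r * (1 + \<bar>u\<bar>))..r * (1 + \<bar>u\<bar>)} (\<lambda>\<tau>. integral {-r..r} (\<lambda>s. H2 (s, u * s + \<tau>))) - integral {-(r * (1 + \<bar>u\<bar>))..\<tau>0} (\<lambda>\<tau>. integral {-r..r} (\<lambda>s. H2 (s, u * s + \<tau>))))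
            else a i * integral {-(r * (1 + \<bar>u\<bar>))..\<tau>0} (\<lambda>\<tau>. integral {-r..r} (\<lambda>s. H1 (s, u * s + \<tau>)))
               + b i * integral {-(r * (1 + \<bar>u\<bar>))..\<tau>0} (\<lambda>\<tau>. integral {-r..r} (\<lambda>s. H2 (s, u * s + \<tau>))))
          / \<bar>g2 i - u * g1 i\<bar>)) = 0"
proof -
  define K where "K = r * (1 + \<bar>u\<bar>)"
  define Phi1 where "Phi1 = (\<lambda>\<tau>. integral {-r..r} (\<lambda>s. H1 (s, u * s + \<tau>)))"
  define Phi2 where "Phi2 = (\<lambda>\<tau>. integral {-r..r} (\<lambda>s. H2 (s, u * s + \<tau>)))"
  define P where "P i z = a i * H1 z + b i * H2 z" for i z
  define T where "T i = 2 * (r * (1 + \<bar>u\<bar>)) / \<bar>g2 i - u * g1 i\<bar>" for i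
  define S where "S = r + (\<Sum>i<m. T i * \<bar>g1 i\<bar>)"
  define Y where "Y i s = integral {0..T i} (\<lambda>t. P i (s + t * g1 i, u * s + \<tau>0 + t * g2 i))" for i s
  have K0: "K > 0" unfolding K_def using r by (simp add: add_pos_nonneg)
  have tau0': "-K \<le> \<tau>0" "\<tau>0 \<le> K" using tau0 unfolding K_def by auto
  have cP: "continuous_on UNIV (P i)" for i unfolding P_def using H1 H2 by (auto intro!: continuous_intros)
  have Pz: "P i (x,y) = 0" if "\<bar>x\<bar> \<ge> r \<or> \<bar>y\<bar> \<ge> r" for i x y unfolding P_def using Hz1[OF that] Hz2[OF that] by simp
  have T0: "T i \<ge> 0" for i unfolding T_def using r by simp
  have cPhi1: "continuous_on UNIV Phi1" unfolding Phi1_def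
    by (rule cont_param[of "\<lambda>\<tau> s. H1(s, u * s + \<tau>)"]) (unfold case_prod_unfold, intro continuous_intros contH2[OF H1])
  have cPhi2: "continuous_on UNIV Phi2" unfolding Phi2_def
    by (rule cont_param[of "\<lambda>\<tau> s. H2(s, u * s + \<tau>)"]) (unfold case_prod_unfold, intro continuous_intros contH2[OF H2])
  have cY: "continuous_on UNIV (Y i)" for i unfolding Y_def
    by (rule cont_param[of "\<lambda>s t. P i (s + t * g1 i, u * s + \<tau>0 + t * g2 i)"])
       (unfold case_prod_unfold, intro continuous_intros contH2[OF cP])
  have XY: "integral {0..} (\<lambda>t. P i (s + t * g1 i, u * s + \<tau>0 + t * g2 i)) = Y i s" if i: "i < m" for i s
  proof -
    have "((\<lambda>t. P i (s + t * g1 i, u * s + \<tau>0 + t * g2 i)) has_integral Y i s) {0..}"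
      unfolding Y_def
    proof (rule trunc_int[OF T0])
      show "continuous_on {0..T i} (\<lambda>t. P i (s + t * g1 i, u * s + \<tau>0 + t * g2 i))"
        by (intro continuous_intros contH2[OF cP])
      fix t assume "T i \<le> t"
      then show "P i (s + t * g1 i, u * s + \<tau>0 + t * g2 i) = 0"
        using P_ray_zero[where P="P i", OF r Pz[where i=i]] bt i tau0 unfolding T_def by blast
    qed
    then show ?thesis by (rule integral_unique)
  qed
  have sumY: "(\<Sum>i<m. c i * Y i s) = 0" for s
  proof -
    have "(\<Sum>i<m. c i * Y i s) = (\<Sum>i<m. c i * integral {0..} (\<lambda>t. P i (s + t * g1 i, u * s + \<tau>0 + t * g2 i)))"
      by (rule sum.cong) (auto simp: XY)
    also have "\<dots> = 0" using E[of s "u * s + \<tau>0"] unfolding P_def by simp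
    finally show ?thesis .
  qed
  have "0 = integral {-S..S} (\<lambda>s. \<Sum>i<m. c i * Y i s)" using sumY by simp
  also have "\<dots> = (\<Sum>i<m. c i * integral {-S..S} (Y i))"
    by (subst integral_sum) (auto intro!: integrable_continuous_interval continuous_intros continuous_on_subset[OF cY])
  also have "\<dots> = (\<Sum>i<m. c i * ((if g2 i - u * g1 i > 0 then integral {\<tau>0..K} (\<lambda>\<tau>. integral {-r..r} (\<lambda>s. P i (s, u * s + \<tau>)))
        else integral {-K..\<tau>0} (\<lambda>\<tau>. integral {-r..r} (\<lambda>s. P i (s, u * s + \<tau>)))) / \<bar>g2 i - u * g1 i\<bar>))"
  proof (rule sum.cong[OF refl])
    fix i assume "i \<in> {..<m}"
    then have i: "i < m" by simp
    have "T i * \<bar>g1 i\<bar> \<le> (\<Sum>i<m. T i * \<bar>g1 i\<bar>)"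
      by (rule member_le_sum) (use i T0 in auto)
    then have "S \<ge> r + (2 * (r * (1 + \<bar>u\<bar>)) / \<bar>g2 i - u * g1 i\<bar>) * \<bar>g1 i\<bar>" unfolding S_def T_def by simp
    from LI[where P="P i", OF cP r Pz[where i=i] _ tau0 this] bt i
    show "c i * integral {-S..S} (Y i) = c i * ((if g2 i - u * g1 i > 0 then integral {\<tau>0..K} (\<lambda>\<tau>. integral {-r..r} (\<lambda>s. P i (s, u * s + \<tau>)))
        else integral {-K..\<tau>0} (\<lambda>\<tau>. integral {-r..r} (\<lambda>s. P i (s, u * s + \<tau>)))) / \<bar>g2 i - u * g1 i\<bar>)"
      unfolding Y_def T_def K_def by simp
  qed
  also have "\<dots> = (\<Sum>i<m. c i * ((if g2 i - u * g1 i > 0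
            then a i * (integral {-K..K} Phi1 - integral {-K..\<tau>0} Phi1) + b i * (integral {-K..K} Phi2 - integral {-K..\<tau>0} Phi2)
            else a i * integral {-K..\<tau>0} Phi1 + b i * integral {-K..\<tau>0} Phi2) / \<bar>g2 i - u * g1 i\<bar>))"
  proof -
    have L: "integral {p..q} (\<lambda>\<tau>. integral {-r..r} (\<lambda>s. P i (s, u * s + \<tau>))) = a i * integral {p..q} Phi1 + b i * integral {p..q} Phi2" for p q i
      unfolding P_def Phi1_def Phi2_def by (rule lin_Phi[OF H1 H2])
    have Q: "integral {\<tau>0..K} F = integral {-K..K} F - integral {-K..\<tau>0} F" if "continuous_on UNIV F" for F :: "real \<Rightarrow> real"
    proof -
      have "integral {-K..\<tau>0} F + integral {\<tau>0..K} F = integral {-K..K} F"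
        by (rule Henstock_Kurzweil_Integration.integral_combine)
           (use tau0' in \<open>auto intro!: integrable_continuous_interval continuous_on_subset[OF that]\<close>)
      then show ?thesis by simp
    qed
    show ?thesis unfolding L Q[OF cPhi1] Q[OF cPhi2] ..
  qed
  finally show ?thesis unfolding K_def Phi1_def Phi2_def by simp
qed

lemma two_lin_zero:
  fixes A B x y :: real
  assumes "A \<noteq> 0 \<or> B \<noteq> 0" "A * x + B * y = 0" "- B * x + A * y = 0"
  shows "x = 0 \<and> y = 0"
proof -
  have "(A * A + B * B) * x = A * (A * x + B * y) - B * (- B * x + A * y)" by (simp add: algebra_simps)
  then have ex: "(A * A + B * B) * x = 0" using assms by simp
  have "(A * A + B * B) * y = B * (A * x + B * y) + A * (- B * x + A * y)" by (simp add: algebra_simps)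
  then have ey: "(A * A + B * B) * y = 0" using assms by simp
  have "A * A + B * B > 0" using assms(1) sum_power2_gt_zero_iff[of A B] by (simp add: power2_eq_square)
  then show ?thesis using ex ey by (metis less_irrefl mult_eq_0_iff)
qed

lemma phi_vanish:
  fixes H1 H2 :: "real\<times>real \<Rightarrow> real" and g1 g2 c :: "nat \<Rightarrow> real"
  assumes H1: "continuous_on UNIV H1" and H2: "continuous_on UNIV H2" and r: "r > 0"
    and Hz1: "\<And>x y. \<bar>x\<bar> \<ge> r \<or> \<bar>y\<bar> \<ge> r \<Longrightarrow> H1(x,y) = 0"
    and Hz2: "\<And>x y. \<bar>x\<bar> \<ge> r \<or> \<bar>y\<bar> \<ge> r \<Longrightarrow> H2(x,y) = 0"
    and E1: "\<And>x y. (\<Sum>i<m. c i * integral {0..} (\<lambda>t. g1 i * H1 (x + t * g1 i, y + t * g2 i) + g2 i * H2 (x + t * g1 i, y + t * g2 i))) = 0"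
    and E2: "\<And>x y. (\<Sum>i<m. c i * integral {0..} (\<lambda>t. (- g2 i) * H1 (x + t * g1 i, y + t * g2 i) + g1 i * H2 (x + t * g1 i, y + t * g2 i))) = 0"
    and bt: "\<forall>i<m. g2 i - u * g1 i \<noteq> 0"
    and AB: "(\<Sum>i<m. c i / (g2 i - u * g1 i) * g1 i) \<noteq> 0 \<or> (\<Sum>i<m. c i / (g2 i - u * g1 i) * g2 i) \<noteq> 0"
  shows "integral {-r..r} (\<lambda>s. H1 (s, u * s + \<tau>)) = 0 \<and> integral {-r..r} (\<lambda>s. H2 (s, u * s + \<tau>)) = 0"
proof -
  define K where "K = r * (1 + \<bar>u\<bar>)"
  define Phi1 where "Phi1 = (\<lambda>\<tau>. integral {-r..r} (\<lambda>s. H1 (s, u * s + \<tau>)))"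
  define Phi2 where "Phi2 = (\<lambda>\<tau>. integral {-r..r} (\<lambda>s. H2 (s, u * s + \<tau>)))"
  define Pr1 where "Pr1 \<tau>0 = integral {-K..\<tau>0} Phi1" for \<tau>0
  define Pr2 where "Pr2 \<tau>0 = integral {-K..\<tau>0} Phi2" for \<tau>0
  define Tot1 where "Tot1 = integral {-K..K} Phi1"
  define Tot2 where "Tot2 = integral {-K..K} Phi2"
  define A where "A = (\<Sum>i<m. c i / (g2 i - u * g1 i) * g1 i)"
  define B where "B = (\<Sum>i<m. c i / (g2 i - u * g1 i) * g2 i)"
  define D1 where "D1 = (\<Sum>i<m. c i / (g2 i - u * g1 i) * (if g2 i - u * g1 i > 0 then g1 i * Tot1 + g2 i * Tot2 else 0))"
  define D2 where "D2 = (\<Sum>i<m. c i / (g2 i - u * g1 i) * (if g2 i - u * g1 i > 0 then (- g2 i) * Tot1 + g1 i * Tot2 else 0))"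
  have K0: "K > 0" unfolding K_def using r by (simp add: add_pos_nonneg)
  have cPhi1: "continuous_on UNIV Phi1" unfolding Phi1_def
    by (rule cont_param[of "\<lambda>\<tau> s. H1(s, u * s + \<tau>)"]) (unfold case_prod_unfold, intro continuous_intros contH2[OF H1])
  have cPhi2: "continuous_on UNIV Phi2" unfolding Phi2_def
    by (rule cont_param[of "\<lambda>\<tau> s. H2(s, u * s + \<tau>)"]) (unfold case_prod_unfold, intro continuous_intros contH2[OF H2])
  have bt': "\<forall>i<m. (\<lambda>i. g2 i - u * g1 i) i \<noteq> 0" using bt by simp
  have eq1: "A * Pr1 \<tau>0 + B * Pr2 \<tau>0 = D1" if t: "\<bar>\<tau>0\<bar> \<le> K" for \<tau>0
  proof -
    have "(\<Sum>i<m. c i * ((if g2 i - u * g1 i > 0 then g1 i * (Tot1 - Pr1 \<tau>0) + g2 i * (Tot2 - Pr2 \<tau>0) else g1 i * Pr1 \<tau>0 + g2 i * Pr2 \<tau>0) / \<bar>g2 i - u * g1 i\<bar>)) = 0"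
      using gen_eq[OF H1 H2 r Hz1 Hz2 E1 bt, of \<tau>0] t
      unfolding K_def Pr1_def Pr2_def Tot1_def Tot2_def Phi1_def Phi2_def by simp
    then show ?thesis using alg_step[OF bt', of c g1 Tot1 "Pr1 \<tau>0" g2 Tot2 "Pr2 \<tau>0"]
      unfolding A_def B_def D1_def by simp
  qed
  have eq2: "- B * Pr1 \<tau>0 + A * Pr2 \<tau>0 = D2" if t: "\<bar>\<tau>0\<bar> \<le> K" for \<tau>0
  proof -
    have "(\<Sum>i<m. c i * ((if g2 i - u * g1 i > 0 then (- g2 i) * (Tot1 - Pr1 \<tau>0) + g1 i * (Tot2 - Pr2 \<tau>0) else (- g2 i) * Pr1 \<tau>0 + g1 i * Pr2 \<tau>0) / \<bar>g2 i - u * g1 i\<bar>)) = 0"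
      using gen_eq[OF H1 H2 r Hz1 Hz2 E2 bt, of \<tau>0] t
      unfolding K_def Pr1_def Pr2_def Tot1_def Tot2_def Phi1_def Phi2_def by simp
    moreover have "(\<Sum>i<m. c i / (g2 i - u * g1 i) * (- g2 i)) = - B" unfolding B_def by (simp add: sum_negf)
    ultimately show ?thesis using alg_step[OF bt', of c "\<lambda>i. - g2 i" Tot1 "Pr1 \<tau>0" g1 Tot2 "Pr2 \<tau>0"]
      unfolding A_def D2_def by simp
  qed
  have "Pr1 (-K) = 0" "Pr2 (-K) = 0" unfolding Pr1_def Pr2_def by simp_all
  then have D0: "D1 = 0" "D2 = 0" using eq1[of "-K"] eq2[of "-K"] K0 by simp_all
  have Pr0: "Pr1 x = 0 \<and> Pr2 x = 0" if "x \<in> {-K..K}" for x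
    by (rule two_lin_zero[of A B]) (use AB that eq1[of x] eq2[of x] D0 in \<open>auto simp: A_def B_def\<close>)
  have z1: "Phi1 x = 0" and z2: "Phi2 x = 0" if "x \<in> {-K..K}" for x
    using zero_from_prim[OF continuous_on_subset[OF cPhi1] _ _ that] zero_from_prim[OF continuous_on_subset[OF cPhi2] _ _ that]
      Pr0 K0 unfolding Pr1_def Pr2_def by auto
  show ?thesis
  proof (cases "\<bar>\<tau>\<bar> \<le> K")
    case True then show ?thesis using z1[of \<tau>] z2[of \<tau>] unfolding Phi1_def Phi2_def by (auto simp: abs_le_iff)
  next
    case False
    then show ?thesis using Phi_zero[where P=H1, OF r Hz1, of u \<tau>] Phi_zero[where P=H2, OF r Hz2, of u \<tau>]
      unfolding K_def by simp
  qed
qed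



lemma unit_parallel:
  fixes a b c d :: real
  assumes "a^2 + b^2 = 1" "c^2 + d^2 = 1" "a * d = b * c"
  shows "(c = a \<and> d = b) \<or> (c = -a \<and> d = -b)"
proof -
  define l where "l = a * c + b * d"
  have "l * a = (a^2 + b^2) * c" unfolding l_def using assms(3) by (simp add: algebra_simps power2_eq_square)
  then have lc: "c = l * a" using assms(1) by simp
  have "l * b = (a^2 + b^2) * d" unfolding l_def using assms(3) by (simp add: algebra_simps power2_eq_square)
  then have ld: "d = l * b" using assms(1) by simp
  have "l^2 * (a^2 + b^2) = 1" using assms(2) lc ld by (simp add: power_mult_distrib algebra_simps)
  then have "l^2 = 1" using assms(1) by simp
  then have "l = 1 \<or> l = -1" by (simp add: power2_eq_1_iff)
  then show ?thesis using lc ld by auto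
qed

lemma bad_finite:
  fixes g1 g2 :: "nat \<Rightarrow> real"
  assumes unit: "\<forall>i<m. g1 i ^ 2 + g2 i ^ 2 = 1"
  shows "finite {u. \<exists>i<m. g2 i - u * g1 i = 0}"
proof -
  have "{u. \<exists>i<m. g2 i - u * g1 i = 0} = (\<Union>i<m. {u. g2 i - u * g1 i = 0})" by auto
  moreover have "finite {u. g2 i - u * g1 i = 0}" if "i < m" for i
  proof (cases "g1 i = 0")
    case True
    then have "g2 i \<noteq> 0" using unit that by auto
    then show ?thesis using True by simp
  next
    case False
    then have "{u. g2 i - u * g1 i = 0} \<subseteq> {g2 i / g1 i}" by (auto simp: field_simps)
    then show ?thesis using finite_subset by blast
  qed
  ultimately show ?thesis by simp
qed

definition kap :: "real \<times> real \<Rightarrow> real \<times> real" where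
  "kap v = (if fst v > 0 \<or> (fst v = 0 \<and> snd v > 0) then v else - v)"

lemma kap_cases: "kap v = v \<or> kap v = - v" unfolding kap_def by auto

lemma kap_neg: "v \<noteq> 0 \<Longrightarrow> kap (- v) = kap v"
  unfolding kap_def by (cases v) (auto simp: zero_prod_def)

lemma kap_fst0: "fst v = 0 \<Longrightarrow> snd v \<noteq> 0 \<Longrightarrow> kap v = (0, \<bar>snd v\<bar>)"
  unfolding kap_def by (cases v) auto

lemma parity:
  fixes g1 g2 c :: "nat \<Rightarrow> real"
  assumes unit: "\<forall>i<m. g1 i ^ 2 + g2 i ^ 2 = 1"
    and inj: "\<forall>i<m. \<forall>j<m. g1 i = g1 j \<and> g2 i = g2 j \<longrightarrow> i = j"
    and c: "\<forall>i<m. c i \<noteq> 0"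
    and C0: "\<forall>k<m. g1 k \<noteq> 0 \<longrightarrow> (\<Sum>i\<in>{i. i < m \<and> g1 i * g2 k = g2 i * g1 k}. c i) = 0"
    and S0: "(\<Sum>i<m. c i) = 0"
  shows "even m"
proof -
  define v where "v i = (g1 i, g2 i)" for i
  define \<kappa> where "\<kappa> i = kap (v i)" for i
  define Y where "Y = \<kappa> ` {..<m}"
  define F where "F y = {i. i \<in> {..<m} \<and> \<kappa> i = y}" for y
  have v0: "v i \<noteq> 0" if "i < m" for i using unit that unfolding v_def by (auto simp: zero_prod_def)
  have vsq: "fst (v i) ^ 2 + snd (v i) ^ 2 = 1" if "i < m" for i using unit that unfolding v_def by auto
  have kpar: "\<kappa> i = \<kappa> j \<longleftrightarrow> g1 i * g2 j = g2 i * g1 j" if ij: "i < m" "j < m" for i j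
  proof
    assume "\<kappa> i = \<kappa> j"
    then have "v j = v i \<or> v j = - v i" unfolding \<kappa>_def using kap_cases[of "v i"] kap_cases[of "v j"] by (metis minus_minus)
    then show "g1 i * g2 j = g2 i * g1 j" unfolding v_def by auto
  next
    assume "g1 i * g2 j = g2 i * g1 j"
    then have "(g1 j = g1 i \<and> g2 j = g2 i) \<or> (g1 j = - g1 i \<and> g2 j = - g2 i)"
      using unit_parallel[of "g1 i" "g2 i" "g1 j" "g2 j"] unit ij by auto
    then have "v j = v i \<or> v j = - v i" unfolding v_def by auto
    then show "\<kappa> i = \<kappa> j" unfolding \<kappa>_def using kap_neg v0 ij by metis
  qed
  have fs_nonvert: "sum c (F y) = 0" if y: "y \<in> Y" "fst y \<noteq> 0" for y
  proof -
    obtain k where k: "k < m" "y = \<kappa> k" using y unfolding Y_def by auto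
    have "fst (\<kappa> k) = g1 k \<or> fst (\<kappa> k) = - g1 k" unfolding \<kappa>_def v_def using kap_cases[of "(g1 k, g2 k)"] by auto
    then have g1k: "g1 k \<noteq> 0" using y k by auto
    have "F y = {i. i < m \<and> g1 i * g2 k = g2 i * g1 k}" unfolding F_def k using kpar k(1) by auto
    then show ?thesis using C0 k g1k by simp
  qed
  have vert: "y = (0,1)" if y: "y \<in> Y" "fst y = 0" for y
  proof -
    obtain k where k: "k < m" "y = \<kappa> k" using y unfolding Y_def by auto
    have "fst (\<kappa> k) = g1 k \<or> fst (\<kappa> k) = - g1 k" unfolding \<kappa>_def v_def using kap_cases[of "(g1 k, g2 k)"] by auto
    then have g1k: "g1 k = 0" using y k by auto
    then have "g2 k ^ 2 = 1" using unit k by auto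
    then have "\<bar>g2 k\<bar> = 1" using power2_eq_1_iff by fastforce
    then show ?thesis unfolding k \<kappa>_def v_def using kap_fst0[of "(g1 k, g2 k)"] g1k by simp
  qed
  have finY: "finite Y" unfolding Y_def by simp
  have decomp: "(\<Sum>i<m. c i) = (\<Sum>y\<in>Y. sum c (F y))"
    unfolding Y_def F_def by (rule sum.image_gen) simp
  have fs0: "sum c (F y) = 0" if y: "y \<in> Y" for y
  proof (cases "fst y = 0")
    case False then show ?thesis using fs_nonvert y by simp
  next
    case True
    then have y01: "y = (0,1)" using vert y by simp
    have "(\<Sum>y\<in>Y. sum c (F y)) = (\<Sum>y\<in>Y \<inter> {(0,1)}. sum c (F y)) + (\<Sum>y\<in>Y - {(0,1)}. sum c (F y))"
      using finY by (metis sum.Int_Diff)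
    moreover have "(\<Sum>y\<in>Y - {(0,1)}. sum c (F y)) = 0"
      by (rule sum.neutral) (use fs_nonvert vert in blast)
    moreover have "Y \<inter> {(0,1)} = {(0,1)}" using y y01 by auto
    ultimately show ?thesis using decomp S0 y01 by simp
  qed
  have card2: "card (F y) = 2" if y: "y \<in> Y" for y
  proof -
    have finF: "finite (F y)" unfolding F_def by simp
    have neF: "F y \<noteq> {}" using y unfolding Y_def F_def by auto
    have injv: "inj_on v (F y)" unfolding inj_on_def F_def v_def using inj by auto
    have "v ` F y \<subseteq> {y, - y}"
    proof
      fix w assume "w \<in> v ` F y"
      then obtain i where i: "i \<in> F y" "w = v i" by auto
      then have "kap (v i) = y" unfolding F_def \<kappa>_def by simp
      then show "w \<in> {y, - y}" using kap_cases[of "v i"] i by auto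
    qed
    then have "card (v ` F y) \<le> card {y, - y}" by (rule card_mono[rotated]) simp
    also have "\<dots> \<le> 2" by (simp add: card_insert_le_m1)
    finally have le2: "card (F y) \<le> 2" using card_image[OF injv] by simp
    have "card (F y) \<noteq> 1"
    proof
      assume "card (F y) = 1"
      then obtain i where "F y = {i}" by (auto simp: card_1_singleton_iff)
      moreover then have "i < m" unfolding F_def by auto
      ultimately show False using fs0[OF y] c by simp
    qed
    moreover have "card (F y) \<noteq> 0" using finF neF by simp
    ultimately show ?thesis using le2 by linarith
  qed
  have "m = card {..<m}" by simp
  also have "\<dots> = (\<Sum>i<m. (1::nat))" by simp
  also have "\<dots> = (\<Sum>y\<in>Y. \<Sum>i\<in>F y. (1::nat))"
    unfolding Y_def F_def by (rule sum.image_gen) simp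
  also have "\<dots> = (\<Sum>y\<in>Y. 2)" by (rule sum.cong) (use card2 in auto)
  also have "\<dots> = 2 * card Y" by simp
  finally show ?thesis by simp
qed

lemma good_inf:
  fixes g1 g2 c :: "nat \<Rightarrow> real"
  assumes unit: "\<forall>i<m. g1 i ^ 2 + g2 i ^ 2 = 1"
    and inj: "\<forall>i<m. \<forall>j<m. g1 i = g1 j \<and> g2 i = g2 j \<longrightarrow> i = j"
    and c: "\<forall>i<m. c i \<noteq> 0"
    and odd: "odd m"
  shows "infinite {u. (\<forall>i<m. g2 i - u * g1 i \<noteq> 0) \<and>
     ((\<Sum>i<m. c i / (g2 i - u * g1 i) * g1 i) \<noteq> 0 \<or> (\<Sum>i<m. c i / (g2 i - u * g1 i) * g2 i) \<noteq> 0)}"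
    (is "infinite ?G")
proof -
  define bad where "bad = {u. \<exists>i<m. g2 i - u * g1 i = 0}"
  have fbad: "finite bad" unfolding bad_def by (rule bad_finite[OF unit])
  show ?thesis
  proof (cases "\<exists>k<m. g1 k \<noteq> 0 \<and> (\<Sum>i\<in>{i. i < m \<and> g1 i * g2 k = g2 i * g1 k}. c i) \<noteq> 0")
    case True
    then obtain k where k: "k < m" "g1 k \<noteq> 0" and Ck: "(\<Sum>i\<in>{i. i < m \<and> g1 i * g2 k = g2 i * g1 k}. c i) \<noteq> 0"
      by blast
    define s0 where "s0 = g2 k / g1 k"
    define par where "par i \<longleftrightarrow> g1 i * g2 k = g2 i * g1 k" for i
    define f where "f u = (\<Sum>i<m. if par i then c i else c i * g1 i * (s0 - u) / (g2 i - u * g1 i))" for u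
    have par2: "g2 i = s0 * g1 i" if "par i" for i using that k(2) unfolding par_def s0_def by (simp add: field_simps)
    have npar: "g2 i - s0 * g1 i \<noteq> 0" if "\<not> par i" for i using that k(2) unfolding par_def s0_def by (simp add: field_simps)
    have ci: "isCont (\<lambda>x. if par i then c i else c i * g1 i * (s0 - x) / (g2 i - x * g1 i)) s0" for i
    proof (cases "par i")
      case True then show ?thesis by simp
    next
      case False then show ?thesis by simp (intro continuous_intros, use npar[OF False] in auto)
    qed
    have cf: "isCont f s0" unfolding f_def
      by (intro continuous_intros ci)
    have "f s0 = (\<Sum>i<m. if par i then c i else 0)" unfolding f_def by (rule sum.cong) auto
    also have "\<dots> = (\<Sum>i\<in>{i. i < m \<and> par i}. c i)" by (simp add: sum.If_cases Int_def conj_commute)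
    finally have fs0: "f s0 \<noteq> 0" using Ck unfolding par_def by simp
    obtain d where d: "d > 0" "\<And>y. dist s0 y < d \<Longrightarrow> f y \<noteq> 0"
      using continuous_at_avoid[OF cf fs0] by blast
    have "{s0<..<s0 + d} - bad \<subseteq> ?G"
    proof
      fix u assume u: "u \<in> {s0<..<s0 + d} - bad"
      then have nb: "\<forall>i<m. g2 i - u * g1 i \<noteq> 0" unfolding bad_def by auto
      have "f u \<noteq> 0" using d u by (auto simp: dist_real_def)
      moreover have "f u = (s0 - u) * (\<Sum>i<m. c i / (g2 i - u * g1 i) * g1 i)"
        unfolding f_def sum_distrib_left
      proof (rule sum.cong[OF refl])
        fix i assume "i \<in> {..<m}"
        then have i: "i < m" by simp
        show "(if par i then c i else c i * g1 i * (s0 - u) / (g2 i - u * g1 i)) = (s0 - u) * (c i / (g2 i - u * g1 i) * g1 i)"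
        proof (cases "par i")
          case True
          then have "g2 i - u * g1 i = g1 i * (s0 - u)" using par2 by (simp add: algebra_simps)
          moreover have "g1 i \<noteq> 0" using True nb i par2 by force
          moreover have "s0 - u \<noteq> 0" using u by auto
          ultimately show ?thesis using True by (simp add: field_simps)
        qed simp
      qed
      ultimately show "u \<in> ?G" using nb by auto
    qed
    moreover have "infinite ({s0<..<s0 + d} - bad)" using Diff_infinite_finite[OF fbad] d by simp
    ultimately show ?thesis using finite_subset by blast
  next
    case False
    then have C0: "\<forall>k<m. g1 k \<noteq> 0 \<longrightarrow> (\<Sum>i\<in>{i. i < m \<and> g1 i * g2 k = g2 i * g1 k}. c i) = 0" by blast
    have S: "(\<Sum>i<m. c i) \<noteq> 0" using parity[OF unit inj c C0] odd by blast
    have "UNIV - bad \<subseteq> ?G"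
    proof
      fix u assume "u \<in> UNIV - bad"
      then have nb: "\<forall>i<m. g2 i - u * g1 i \<noteq> 0" unfolding bad_def by auto
      have "(\<Sum>i<m. c i / (g2 i - u * g1 i) * g2 i) - u * (\<Sum>i<m. c i / (g2 i - u * g1 i) * g1 i)
          = (\<Sum>i<m. c i / (g2 i - u * g1 i) * (g2 i - u * g1 i))"
        by (simp add: sum_distrib_left sum_subtractf[symmetric] algebra_simps diff_divide_distrib)
      also have "\<dots> = (\<Sum>i<m. c i)" by (rule sum.cong) (use nb in auto)
      finally show "u \<in> ?G" using nb S by auto
    qed
    moreover have "infinite (UNIV - bad)" using Diff_infinite_finite[OF fbad] infinite_UNIV_char_0 by blast
    ultimately show ?thesis using finite_subset by blast
  qed
qed



lemma C2c_props:
  assumes "C2c U h"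
  shows "continuous_on UNIV h" "\<And>x. x \<notin> U \<Longrightarrow> h x = 0"
proof -
  from assms obtain D1 where d: "\<forall>x. (h has_derivative blinfun_apply (D1 x)) (at x)"
    unfolding C2c_def C2_def by blast
  show "continuous_on UNIV h"
  proof (rule continuous_at_imp_continuous_on, intro ballI)
    fix x show "isCont h x" by (rule has_derivative_continuous[OF d[rule_format]])
  qed
  fix x assume x: "x \<notin> U"
  have "closure {x. h x \<noteq> 0} \<subseteq> U" using assms unfolding C2c_def by (rule conjunct2[OF conjunct2])
  then have "x \<notin> closure {x. h x \<noteq> 0}" using x by (meson subsetD)
  then have "x \<notin> {x. h x \<noteq> 0}" using closure_subset by (meson subsetD)
  then show "h x = 0" by simp
qed

lemma vec2_eq: "(vector [a, b] :: real^2) = (\<chi> i. if i = 1 then a else b)"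
  by (simp add: vec_eq_iff forall_2)

lemma cont_vec2: "continuous_on UNIV (\<lambda>p::real\<times>real. vector [fst p, snd p] :: real^2)"
  unfolding vec2_eq
proof (intro continuous_on_vec_lambda)
  fix i :: 2
  show "continuous_on UNIV (\<lambda>x::real\<times>real. if i = 1 then fst x else snd x)"
    by (cases "i = 1") (simp_all add: continuous_on_fst continuous_on_snd continuous_on_id)
qed

lemma vec2_decomp: "(z::real^2) = vector [z$1, z$2]"
  by (simp add: vec_eq_iff forall_2)

lemma vec2_add_scale: "vector [x, y] + t *\<^sub>R (g::real^2) = vector [x + t * g$1, y + t * g$2]"
  by (simp add: vec_eq_iff forall_2)

lemma inner2: "(v::real^2) \<bullet> w = v$1 * w$1 + v$2 * w$2"
  by (simp add: inner_vec_def sum_2)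

lemma perp2: "perp g $ 1 = - g$2" "perp g $ 2 = g$1"
  unfolding perp_def by simp_all

lemma ray_int:
  fixes \<phi> :: "real^2 \<Rightarrow> real"
  assumes "continuous_on UNIV \<phi>" "\<And>z. norm z \<ge> r \<Longrightarrow> \<phi> z = 0" "norm (gam::real^2) = 1" "r > 0"
  shows "(\<lambda>t. \<phi> (x + t *\<^sub>R gam)) integrable_on {0..}"
proof -
  have "((\<lambda>t. \<phi> (x + t *\<^sub>R gam)) has_integral integral {0..r + norm x} (\<lambda>t. \<phi> (x + t *\<^sub>R gam))) {0..}"
  proof (rule trunc_int)
    show "0 \<le> r + norm x" using assms(4) by simp
    show "continuous_on {0..r + norm x} (\<lambda>t. \<phi> (x + t *\<^sub>R gam))"
      by (rule continuous_on_compose2[OF assms(1)]) (auto intro!: continuous_intros)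
    fix t assume t: "r + norm x \<le> t"
    have "norm ((x + t *\<^sub>R gam) - x) \<le> norm (x + t *\<^sub>R gam) + norm x" by (rule norm_triangle_ineq4)
    then have "norm (t *\<^sub>R gam) \<le> norm (x + t *\<^sub>R gam) + norm x" by simp
    moreover have "t \<ge> 0" using t assms(4) norm_ge_zero[of x] by linarith
    then have "norm (t *\<^sub>R gam) = t" using assms(3) by simp
    ultimately have "norm (x + t *\<^sub>R gam) \<ge> r" using t by simp
    then show "\<phi> (x + t *\<^sub>R gam) = 0" using assms(2) by blast
  qed
  then show ?thesis by blast
qed

theorem corollary3:
  fixes r :: real and m :: nat and gam :: "nat \<Rightarrow> real^2" and c :: "nat \<Rightarrow> real"
    and f g :: "real^2 \<Rightarrow> real^2"
  assumes "r > 0"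
    and "odd m"
    and "inj_on gam {..<m}"
    and "\<forall>i<m. norm (gam i) = 1"
    and "\<forall>i<m. c i \<noteq> 0"
    and "C2c (ball 0 r) (\<lambda>x. f x $ 1)" and "C2c (ball 0 r) (\<lambda>x. f x $ 2)"
    and "C2c (ball 0 r) (\<lambda>x. g x $ 1)" and "C2c (ball 0 r) (\<lambda>x. g x $ 2)"
    and "star_transform m c gam f = star_transform m c gam g"
  shows "f = g"
proof -
  note r = assms(1)
  have cf1: "continuous_on UNIV (\<lambda>x. f x $ 1)" and cf2: "continuous_on UNIV (\<lambda>x. f x $ 2)"
   and cg1: "continuous_on UNIV (\<lambda>x. g x $ 1)" and cg2: "continuous_on UNIV (\<lambda>x. g x $ 2)"
    using C2c_props(1) assms(6-9) by blast+
  have nb: "x \<notin> ball 0 r" if "norm x \<ge> r" for x :: "real^2" using that by simp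
  have zf1: "f x $ 1 = 0" and zf2: "f x $ 2 = 0" and zg1: "g x $ 1 = 0" and zg2: "g x $ 2 = 0"
    if "norm x \<ge> r" for x
    using C2c_props(2)[OF assms(6) nb[OF that]] C2c_props(2)[OF assms(7) nb[OF that]]
      C2c_props(2)[OF assms(8) nb[OF that]] C2c_props(2)[OF assms(9) nb[OF that]] by auto
  define H1 where "H1 p = f (vector [fst p, snd p]) $ 1 - g (vector [fst p, snd p]) $ 1" for p :: "real \<times> real"
  define H2 where "H2 p = f (vector [fst p, snd p]) $ 2 - g (vector [fst p, snd p]) $ 2" for p :: "real \<times> real"
  have cH1: "continuous_on UNIV H1" unfolding H1_def
    by (intro continuous_intros continuous_on_compose2[OF cf1 cont_vec2] continuous_on_compose2[OF cg1 cont_vec2]) auto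
  have cH2: "continuous_on UNIV H2" unfolding H2_def
    by (intro continuous_intros continuous_on_compose2[OF cf2 cont_vec2] continuous_on_compose2[OF cg2 cont_vec2]) auto
  have nv: "norm (vector [a, b] :: real^2) \<ge> r" if "\<bar>a\<bar> \<ge> r \<or> \<bar>b\<bar> \<ge> r" for a b
    using that component_le_norm_cart[of "vector [a, b] :: real^2" 1] component_le_norm_cart[of "vector [a, b] :: real^2" 2]
    by auto
  have Hz1: "H1 (a, b) = 0" and Hz2: "H2 (a, b) = 0" if "\<bar>a\<bar> \<ge> r \<or> \<bar>b\<bar> \<ge> r" for a b
    unfolding H1_def H2_def using zf1 zf2 zg1 zg2 nv[OF that] by simp_all
  have Hz: "H1 (z $ 1, z $ 2) = f z $ 1 - g z $ 1" "H2 (z $ 1, z $ 2) = f z $ 2 - g z $ 2" for z :: "real^2"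
    unfolding H1_def H2_def by (simp_all flip: vec2_decomp)
  define g1 where "g1 i = gam i $ 1" for i
  define g2 where "g2 i = gam i $ 2" for i
  have ray: "ray_transform (gam i) (\<lambda>y. f y \<bullet> w) p - ray_transform (gam i) (\<lambda>y. g y \<bullet> w) p
      = integral {0..} (\<lambda>t. w $ 1 * H1 (p $ 1 + t * g1 i, p $ 2 + t * g2 i) + w $ 2 * H2 (p $ 1 + t * g1 i, p $ 2 + t * g2 i))"
    if i: "i < m" for i w p
  proof -
    have cfw: "continuous_on UNIV (\<lambda>y. f y \<bullet> w)" unfolding inner2 by (intro continuous_on_add continuous_on_mult_right cf1 cf2)
    have cgw: "continuous_on UNIV (\<lambda>y. g y \<bullet> w)" unfolding inner2 by (intro continuous_on_add continuous_on_mult_right cg1 cg2)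
    have zfw: "f y \<bullet> w = 0" if "norm y \<ge> r" for y unfolding inner2 using zf1[OF that] zf2[OF that] by simp
    have zgw: "g y \<bullet> w = 0" if "norm y \<ge> r" for y unfolding inner2 using zg1[OF that] zg2[OF that] by simp
    have n1: "norm (gam i) = 1" using assms(4) i by blast
    have "ray_transform (gam i) (\<lambda>y. f y \<bullet> w) p - ray_transform (gam i) (\<lambda>y. g y \<bullet> w) p
        = integral {0..} (\<lambda>t. f (p + t *\<^sub>R gam i) \<bullet> w - g (p + t *\<^sub>R gam i) \<bullet> w)"
      unfolding ray_transform_def
      by (rule integral_diff[symmetric]) (rule ray_int[OF _ _ n1 r]; (use cfw cgw zfw zgw in auto))+
    also have "\<dots> = integral {0..} (\<lambda>t. w $ 1 * H1 (p $ 1 + t * g1 i, p $ 2 + t * g2 i) + w $ 2 * H2 (p $ 1 + t * g1 i, p $ 2 + t * g2 i))"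
    proof (rule integral_cong)
      fix t
      have e1: "(p + t *\<^sub>R gam i) $ 1 = p $ 1 + t * g1 i" and e2: "(p + t *\<^sub>R gam i) $ 2 = p $ 2 + t * g2 i"
        unfolding g1_def g2_def by simp_all
      show "f (p + t *\<^sub>R gam i) \<bullet> w - g (p + t *\<^sub>R gam i) \<bullet> w = w $ 1 * H1 (p $ 1 + t * g1 i, p $ 2 + t * g2 i) + w $ 2 * H2 (p $ 1 + t * g1 i, p $ 2 + t * g2 i)"
        unfolding e1[symmetric] e2[symmetric] Hz inner2 by (simp add: algebra_simps)
    qed
    finally show ?thesis .
  qed
  have st: "star_transform m c gam f p $ j - star_transform m c gam g p $ j = 0" for p j
    using assms(10) by simp
  have E1: "(\<Sum>i<m. c i * integral {0..} (\<lambda>t. g1 i * H1 (x + t * g1 i, y + t * g2 i) + g2 i * H2 (x + t * g1 i, y + t * g2 i))) = 0" for x y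
  proof -
    let ?p = "vector [x, y] :: real^2"
    have "0 = star_transform m c gam f ?p $ 1 - star_transform m c gam g ?p $ 1" using st by simp
    also have "\<dots> = (\<Sum>i<m. c i * (ray_transform (gam i) (\<lambda>y. f y \<bullet> gam i) ?p - ray_transform (gam i) (\<lambda>y. g y \<bullet> gam i) ?p))"
      unfolding star_transform_def by (simp add: sum_subtractf[symmetric] algebra_simps)
    also have "\<dots> = (\<Sum>i<m. c i * integral {0..} (\<lambda>t. g1 i * H1 (x + t * g1 i, y + t * g2 i) + g2 i * H2 (x + t * g1 i, y + t * g2 i)))"
      by (rule sum.cong[OF refl]) (simp add: ray g1_def g2_def)
    finally show ?thesis by simp
  qed
  have E2: "(\<Sum>i<m. c i * integral {0..} (\<lambda>t. (- g2 i) * H1 (x + t * g1 i, y + t * g2 i) + g1 i * H2 (x + t * g1 i, y + t * g2 i))) = 0" for x y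
  proof -
    let ?p = "vector [x, y] :: real^2"
    have "0 = star_transform m c gam f ?p $ 2 - star_transform m c gam g ?p $ 2" using st by simp
    also have "\<dots> = (\<Sum>i<m. c i * (ray_transform (gam i) (\<lambda>y. f y \<bullet> perp (gam i)) ?p - ray_transform (gam i) (\<lambda>y. g y \<bullet> perp (gam i)) ?p))"
      unfolding star_transform_def by (simp add: sum_subtractf[symmetric] algebra_simps)
    also have "\<dots> = (\<Sum>i<m. c i * integral {0..} (\<lambda>t. (- g2 i) * H1 (x + t * g1 i, y + t * g2 i) + g1 i * H2 (x + t * g1 i, y + t * g2 i)))"
      by (rule sum.cong[OF refl]) (simp add: ray perp2 g1_def g2_def)
    finally show ?thesis by simp
  qed
  have unit: "\<forall>i<m. g1 i ^ 2 + g2 i ^ 2 = 1"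
  proof (intro allI impI)
    fix i assume "i < m"
    then have "norm (gam i) ^ 2 = 1" using assms(4) by simp
    then show "g1 i ^ 2 + g2 i ^ 2 = 1" unfolding power2_norm_eq_inner inner2 g1_def g2_def by (simp add: power2_eq_square)
  qed
  have inj': "\<forall>i<m. \<forall>j<m. g1 i = g1 j \<and> g2 i = g2 j \<longrightarrow> i = j"
  proof (intro allI impI)
    fix i j assume ij: "i < m" "j < m" and "g1 i = g1 j \<and> g2 i = g2 j"
    then have "gam i = gam j" unfolding g1_def g2_def by (simp add: vec_eq_iff forall_2)
    then show "i = j" using assms(3) ij by (simp add: inj_on_def)
  qed
  define M where "M = {u. (\<forall>i<m. g2 i - u * g1 i \<noteq> 0) \<and>
     ((\<Sum>i<m. c i / (g2 i - u * g1 i) * g1 i) \<noteq> 0 \<or> (\<Sum>i<m. c i / (g2 i - u * g1 i) * g2 i) \<noteq> 0)}"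
  have Minf: "infinite M" unfolding M_def by (rule good_inf[OF unit inj' assms(5) assms(2)])
  have PV: "integral {-r..r} (\<lambda>s. H1 (s, u * s + \<tau>)) = 0 \<and> integral {-r..r} (\<lambda>s. H2 (s, u * s + \<tau>)) = 0"
    if "u \<in> M" for u \<tau>
    using that unfolding M_def by (intro phi_vanish[OF cH1 cH2 r Hz1 Hz2 E1 E2]) auto
  have all0: "H (a, b) = 0" if cH: "continuous_on UNIV H" and HzH: "\<And>a b. \<bar>a\<bar> \<ge> r \<or> \<bar>b\<bar> \<ge> r \<Longrightarrow> H (a, b) = 0"
    and PH: "\<And>u \<tau>. u \<in> M \<Longrightarrow> integral {-r..r} (\<lambda>s. H (s, u * s + \<tau>)) = 0" for H :: "real \<times> real \<Rightarrow> real" and a b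
  proof -
    have "JJ H r (\<lambda>(s,y). s^a' * y^b') = 0" for a' b'
      by (rule moments_from_mu[OF cH Minf]) (rule phi_zero_imp_mom[OF cH r HzH PH])
    then have "\<forall>s\<in>{-r..r}. \<forall>y\<in>{-r..r}. H(s,y) = 0" using moments_zero[OF cH r] by blast
    then have in0: "H (a, b) = 0" if "a \<in> {-r..r}" "b \<in> {-r..r}" using that by blast
    show ?thesis
    proof (cases "\<bar>a\<bar> \<ge> r \<or> \<bar>b\<bar> \<ge> r")
      case True then show ?thesis by (rule HzH)
    next
      case False
      then have "a \<in> {-r..r}" "b \<in> {-r..r}" by (auto simp: abs_le_iff)
      then show ?thesis by (rule in0)
    qed
  qed
  have H10: "H1 (a, b) = 0" and H20: "H2 (a, b) = 0" for a b
    using all0[OF cH1 Hz1] all0[OF cH2 Hz2] PV by blast+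
  show ?thesis
  proof (rule ext)
    fix z
    show "f z = g z" using H10[of "z $ 1" "z $ 2"] H20[of "z $ 1" "z $ 2"] unfolding Hz
      by (simp add: vec_eq_iff forall_2)
  qed
qed


end
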